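(* Suppose the weight function $w$ satisfies $w\le M$ almost everywhere. Then there exists an absolute constant $C>0$ such that for every $n\ge1$ and every $-1<x<1$, $$\lambda(x)\le\frac{CM}{n}\max\left\{\sqrt{1-x^2},\frac1n\right\}.$$
   Context: A weight function is a non-negative integrable function $w$ on $[-1,1]$ with nonzero integral. Fix $n\ge1$. Let $\varphi$ be the orthonormal polynomial of degree $n$ with positive leading coefficient w.r.t. $w(t)\,dt$ on $[-1,1]$ and $\psi$ the orthonormal polynomial of degree $n-1$ with positive leading coefficient w.r.t. $(1-t^2)w(t)\,dt$. For real $a$ let $P_a(t)=\varphi(t)-a(1-t)\psi(t)$ if $a\ge0$, $P_a(t)=\varphi(t)-a(1+t)\psi(t)$ if $a\le0$; its zeros are $-1<\xi_1(a)<\dots<\xi_n(a)<1$. The zeros of $(1-t^2)\psi(t)$ are $-1=\eta_0<\eta_1<\dots<\eta_n=1$. The following node sets each carry a unique quadrature formula with positive weights exact for all polynomials of degree $\le 2n-1$ with respect to $w$: $\{\xi_i(0)\}_{i=1}^n$; $\{\eta_0,\dots,\eta_n\}$; $\{-1\}\cup\{\xi_i(a)\}_i$ for $0<a<\infty$; $\{\xi_i(a)\}_i\cup\{1\}$ for $-\infty<a<0$. Each $x\in(-1,1)$ is a node of exactly one of them, denoted $\Sigma_x$; $\lambda(x)$ is the weight of $x$ in $\Sigma_x$. *)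

theory Defs
  imports "HOL-Analysis.Analysis" "HOL-Computational_Algebra.Polynomial"
begin

definition weight_fun :: "(real \<Rightarrow> real) \<Rightarrow> bool" where
  "weight_fun w \<longleftrightarrow> (\<forall>t\<in>{-1..1}. 0 \<le> w t) \<and> set_integrable lborel {-1..1::real} w
     \<and> (LINT t:{-1..1}|lborel. w t) \<noteq> 0"

definition orthonormal_poly :: "(real \<Rightarrow> real) \<Rightarrow> nat \<Rightarrow> real poly \<Rightarrow> bool" where
  "orthonormal_poly v n p \<longleftrightarrow> degree p = n \<and> lead_coeff p > 0
     \<and> (\<forall>q::real poly. degree q < n \<longrightarrow> (LINT t:{-1..1}|lborel. v t * poly p t * poly q t) = 0)
     \<and> (LINT t:{-1..1}|lborel. v t * (poly p t)^2) = 1"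

definition phi :: "(real \<Rightarrow> real) \<Rightarrow> nat \<Rightarrow> real poly" where
  "phi w n = (THE p. orthonormal_poly w n p)"

definition psi :: "(real \<Rightarrow> real) \<Rightarrow> nat \<Rightarrow> real poly" where
  "psi w n = (THE p. orthonormal_poly (\<lambda>t. (1 - t^2) * w t) (n - 1) p)"

definition Pa :: "(real \<Rightarrow> real) \<Rightarrow> nat \<Rightarrow> real \<Rightarrow> real poly" where
  "Pa w n a = (if a \<ge> 0 then phi w n - smult a ([:1, -1:] * psi w n)
               else phi w n - smult a ([:1, 1:] * psi w n))"

definition pos_quadrature :: "(real \<Rightarrow> real) \<Rightarrow> nat \<Rightarrow> real set \<Rightarrow> (real \<Rightarrow> real) \<Rightarrow> bool" where
  "pos_quadrature w n S c \<longleftrightarrow> finite S \<and> (\<forall>s\<in>S. c s > 0)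
     \<and> (\<forall>p::real poly. degree p \<le> 2*n - 1 \<longrightarrow>
          (\<Sum>s\<in>S. c s * poly p s) = (LINT t:{-1..1}|lborel. w t * poly p t))"

definition node_sets :: "(real \<Rightarrow> real) \<Rightarrow> nat \<Rightarrow> real set set" where
  "node_sets w n =
     {{t. poly (Pa w n 0) t = 0}, {t. poly ([:1, 0, -1:] * psi w n) t = 0}}
     \<union> {insert (-1) {t. poly (Pa w n a) t = 0} | a. a > 0}
     \<union> {insert 1 {t. poly (Pa w n a) t = 0} | a. a < 0}"

text \<open>lambda(x): the weight of x in the unique formula Sigma_x of the family having x as node.\<close>
definition lam :: "(real \<Rightarrow> real) \<Rightarrow> nat \<Rightarrow> real \<Rightarrow> real" where
  "lam w n x = (THE l. \<exists>S c. S \<in> node_sets w n \<and> x \<in> S \<and> pos_quadrature w n S c \<and> c x = l)"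

end

theory Submission
  imports Defs
begin


lemma wf_int_poly:
  assumes "weight_fun v"
  shows "set_integrable lborel {-1..1::real} (\<lambda>t. v t * poly p t)"
proof -
  have vi: "set_integrable lborel {-1..1::real} v" using assms by (simp add: weight_fun_def)
  obtain B where B: "\<And>t. t \<in> {-1..1::real} \<Longrightarrow> \<bar>poly p t\<bar> \<le> B"
  proof -
    have "compact ((poly p) ` {-1..1::real})"
      by (intro compact_continuous_image) (auto intro: continuous_intros)
    then obtain B where "\<forall>y\<in>(poly p) ` {-1..1::real}. norm y \<le> B"
      using compact_imp_bounded bounded_iff by metis
    then show ?thesis using that[of B] by auto
  qed
  show ?thesis
  proof (rule set_integrable_bound[of _ _ "\<lambda>t. B * v t"])
    show "set_integrable lborel {-1..1} (\<lambda>t. B * v t)" using vi by simp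
    have m: "(\<lambda>t. indicator {-1..1::real} t *\<^sub>R v t) \<in> borel_measurable lborel"
      using vi unfolding set_integrable_def by (rule borel_measurable_integrable)
    have pm[measurable]: "poly p \<in> borel_measurable borel"
      by (intro borel_measurable_continuous_onI) (auto intro: continuous_intros)
    have "(\<lambda>t. (indicator {-1..1::real} t *\<^sub>R v t) * poly p t) \<in> borel_measurable lborel"
      using m by measurable
    then show "set_borel_measurable lborel {-1..1} (\<lambda>t. v t * poly p t)"
      unfolding set_borel_measurable_def by (simp add: mult.assoc)
    show "AE t in lborel. t \<in> {-1..1} \<longrightarrow> norm (v t * poly p t) \<le> norm (B * v t)"
    proof (rule AE_I2, rule impI)
      fix t :: real assume t: "t \<in> {-1..1}"
      have "0 \<le> v t" using assms t by (simp add: weight_fun_def)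
      then have "\<bar>v t * poly p t\<bar> = v t * \<bar>poly p t\<bar>" by (simp add: abs_mult)
      also have "\<dots> \<le> v t * B" using B[OF t] \<open>0 \<le> v t\<close> by (rule mult_left_mono)
      also have "\<dots> \<le> \<bar>B * v t\<bar>" by (simp add: mult.commute)
      finally show "norm (v t * poly p t) \<le> norm (B * v t)" by simp
    qed
  qed
qed

definition IW :: "(real \<Rightarrow> real) \<Rightarrow> real poly \<Rightarrow> real" where
  "IW v p = (LINT t:{-1..1}|lborel. v t * poly p t)"

lemma IW_add: "weight_fun v \<Longrightarrow> IW v (p + q) = IW v p + IW v q"
  unfolding IW_def using wf_int_poly[of v p] wf_int_poly[of v q]
  by (simp add: distrib_left set_integral_add)

lemma IW_smult: "IW v (smult c p) = c * IW v p"
proof -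
  have "IW v (smult c p) = (LINT t:{-1..1}|lborel. c * (v t * poly p t))"
    unfolding IW_def by (simp add: mult.left_commute)
  then show ?thesis unfolding IW_def by simp
qed

lemma IW_minus: "IW v (- p) = - IW v p"
  using IW_smult[of v "-1" p] by simp

lemma IW_diff: "weight_fun v \<Longrightarrow> IW v (p - q) = IW v p - IW v q"
  using IW_add[of v p "-q"] IW_minus[of v q] by simp

lemma IW_sum: "weight_fun v \<Longrightarrow> IW v (\<Sum>i\<in>S. f i) = (\<Sum>i\<in>S. IW v (f i))"
proof (induction S rule: infinite_finite_induct)
  case (insert x F)
  then show ?case by (simp add: IW_add)
qed (auto simp: IW_def)

lemma IW_0[simp]: "IW v 0 = 0"
  unfolding IW_def by simp

lemma IW_ge0:
  assumes "weight_fun v" "\<And>t. t \<in> {-1<..<1} \<Longrightarrow> 0 \<le> poly p t"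
  shows "0 \<le> IW v p"
proof -
  have "AE t in lborel. t \<notin> {-1, 1::real}"
    using finite_imp_null_set_lborel[of "{-1,1::real}"] by (intro AE_not_in) auto
  then have "AE t in lborel. 0 \<le> indicator {-1..1::real} t *\<^sub>R (v t * poly p t)"
  proof (rule AE_mp, intro AE_I2 impI)
    fix t :: real assume "t \<notin> {-1, 1}"
    then show "0 \<le> indicator {-1..1::real} t *\<^sub>R (v t * poly p t)"
      using assms by (cases "t \<in> {-1..1}") (auto simp: weight_fun_def)
  qed
  then show ?thesis unfolding IW_def set_lebesgue_integral_def
    by (rule integral_nonneg_AE)
qed

lemma IW_pos:
  assumes "weight_fun v" "p \<noteq> 0" "\<And>t. t \<in> {-1<..<1} \<Longrightarrow> 0 \<le> poly p t"
  shows "0 < IW v p"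
proof -
  have ge: "0 \<le> IW v p" using IW_ge0 assms by blast
  have "IW v p \<noteq> 0"
  proof
    assume z: "IW v p = 0"
    have AE0: "AE t in lborel. t \<notin> {-1, 1::real}"
      using finite_imp_null_set_lborel[of "{-1,1::real}"] by (intro AE_not_in) auto
    have nn: "AE t in lborel. 0 \<le> indicator {-1..1::real} t *\<^sub>R (v t * poly p t)"
      using AE0
    proof (rule AE_mp, intro AE_I2 impI)
      fix t :: real assume "t \<notin> {-1, 1}"
      then show "0 \<le> indicator {-1..1::real} t *\<^sub>R (v t * poly p t)"
        using assms by (cases "t \<in> {-1..1}") (auto simp: weight_fun_def)
    qed
    have int: "integrable lborel (\<lambda>t. indicator {-1..1::real} t *\<^sub>R (v t * poly p t))"
      using wf_int_poly[OF assms(1)] unfolding set_integrable_def .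
    have "AE t in lborel. indicator {-1..1::real} t *\<^sub>R (v t * poly p t) = 0"
      using integral_nonneg_eq_0_iff_AE[OF int nn] z unfolding IW_def set_lebesgue_integral_def by simp
    moreover have "AE t in lborel. t \<notin> {x. poly p x = 0}"
      using finite_imp_null_set_lborel[OF poly_roots_finite[OF assms(2)]] by (intro AE_not_in) auto
    ultimately have "AE t in lborel. indicator {-1..1::real} t *\<^sub>R v t = 0"
      by eventually_elim (auto simp: indicator_def)
    then have "(LINT t:{-1..1}|lborel. v t) = 0"
      unfolding set_lebesgue_integral_def by (rule integral_eq_zero_AE)
    then show False using assms(1) by (simp add: weight_fun_def)
  qed
  with ge show ?thesis by simp
qed


lemma weight_fun_mult:
  assumes "weight_fun w" "g \<noteq> 0" "\<And>t. t \<in> {-1..1} \<Longrightarrow> 0 \<le> poly g t"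
  shows "weight_fun (\<lambda>t. poly g t * w t)"
proof -
  have "(LINT t:{-1..1}|lborel. poly g t * w t) = IW w g"
    unfolding IW_def by (simp add: mult.commute)
  also have "\<dots> > 0" using assms by (intro IW_pos) auto
  finally show ?thesis using assms wf_int_poly[OF assms(1), of g]
    unfolding weight_fun_def by (auto simp: mult.commute)
qed

lemma IW_mult_weight: "IW (\<lambda>t. poly g t * w t) p = IW w (g * p)"
  unfolding IW_def by (simp add: mult_ac)

lemma degree_diff_eq_left:
  fixes p q :: "'a::ab_group_add poly"
  shows "degree q < degree p \<Longrightarrow> degree (p - q) = degree p"
  using degree_add_eq_left[of "-q" p] by simp

lemma degree_lt_from_coeff:
  fixes r :: "real poly"
  assumes "degree r \<le> n" "coeff r n = 0" "r \<noteq> 0"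
  shows "degree r < n"
proof (rule ccontr)
  assume "\<not> degree r < n"
  then have "degree r = n" using assms by simp
  then show False using assms leading_coeff_0_iff by metis
qed

lemma projection_exists:
  assumes v: "weight_fun v"
  shows "\<exists>g. degree g \<le> n \<and> (\<forall>q. degree q \<le> n \<longrightarrow> IW v ((f - g) * q) = 0)"
proof (induction n arbitrary: f)
  case 0
  have pos: "IW v 1 > 0" using IW_pos[OF v, of 1] by simp
  define c where "c = IW v f / IW v 1"
  show ?case
  proof (intro exI[of _ "[:c:]"] conjI allI impI)
    fix q :: "real poly" assume "degree q \<le> 0"
    then obtain d where q: "q = [:d:]" by (metis degree_eq_zeroE le_zero_eq)
    have "IW v ((f - [:c:]) * q) = d * (IW v f - c * IW v 1)"
      unfolding q using v by (simp add: IW_diff IW_smult algebra_simps flip: smult_1_left)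
         (simp add: IW_smult[symmetric] mult.commute)
    also have "\<dots> = 0" using pos by (simp add: c_def)
    finally show "IW v ((f - [:c:]) * q) = 0" .
  qed simp
next
  case (Suc n)
  obtain g0 where g0: "degree g0 \<le> n" "\<And>q. degree q \<le> n \<Longrightarrow> IW v ((monom 1 (Suc n) - g0) * q) = 0"
    using Suc.IH[of "monom 1 (Suc n)"] by blast
  define P where "P = monom 1 (Suc n) - g0"
  have degP: "degree P = Suc n" unfolding P_def using g0(1)
    by (subst degree_diff_eq_left) (auto simp: degree_monom_eq)
  have cP: "coeff P (Suc n) = 1" unfolding P_def using g0(1) by (simp add: coeff_eq_0)
  have P0: "P \<noteq> 0" using degP by auto
  have Portho: "\<And>q. degree q \<le> n \<Longrightarrow> IW v (P * q) = 0" using g0(2) unfolding P_def by blast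
  have PP: "IW v (P * P) > 0"
    using IW_pos[OF v, of "P * P"] P0 by (simp add: zero_le_mult_iff)
  obtain g1 where g1: "degree g1 \<le> n" "\<And>q. degree q \<le> n \<Longrightarrow> IW v ((f - g1) * q) = 0"
    using Suc.IH[of f] by blast
  define \<beta> where "\<beta> = IW v ((f - g1) * P) / IW v (P * P)"
  show ?case
  proof (intro exI[of _ "g1 + smult \<beta> P"] conjI allI impI)
    show "degree (g1 + smult \<beta> P) \<le> Suc n"
      using g1(1) degP by (intro degree_add_le) auto
    fix q :: "real poly" assume q: "degree q \<le> Suc n"
    define \<gamma> where "\<gamma> = coeff q (Suc n)"
    define q' where "q' = q - smult \<gamma> P"
    have dq': "degree q' \<le> n"
    proof (cases "q' = 0")
      case False
      have "degree q' \<le> Suc n" unfolding q'_def using q degP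
        by (intro degree_diff_le) auto
      moreover have "coeff q' (Suc n) = 0" unfolding q'_def \<gamma>_def using cP by simp
      ultimately show ?thesis using degree_lt_from_coeff[OF _ _ False] by fastforce
    qed simp
    have qq: "q = smult \<gamma> P + q'" unfolding q'_def by simp
    have e1: "IW v ((f - g1) * q') = 0" using g1(2)[OF dq'] .
    have e2: "IW v (P * q') = 0" using Portho[OF dq'] .
    have "(f - (g1 + smult \<beta> P)) * q
        = smult \<gamma> ((f - g1) * P) + (f - g1) * q' - smult (\<beta> * \<gamma>) (P * P) - smult \<beta> (P * q')"
      unfolding qq by (simp add: algebra_simps smult_diff_right smult_add_right)
    then have "IW v ((f - (g1 + smult \<beta> P)) * q)
        = \<gamma> * IW v ((f - g1) * P) + IW v ((f - g1) * q') - \<beta> * \<gamma> * IW v (P * P) - \<beta> * IW v (P * q')"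
      using v by (simp add: IW_add IW_diff IW_smult)
    also have "\<dots> = 0" using e1 e2 PP by (simp add: \<beta>_def)
    finally show "IW v ((f - (g1 + smult \<beta> P)) * q) = 0" .
  qed
qed

lemma monic_orth_exists:
  assumes v: "weight_fun v"
  shows "\<exists>P. degree P = n \<and> lead_coeff P = 1 \<and> (\<forall>q. degree q < n \<longrightarrow> IW v (P * q) = 0)"
proof (cases n)
  case 0
  then show ?thesis by (intro exI[of _ 1]) auto
next
  case (Suc m)
  obtain g0 where g0: "degree g0 \<le> m" "\<And>q. degree q \<le> m \<Longrightarrow> IW v ((monom 1 n - g0) * q) = 0"
    using projection_exists[OF v, of m "monom 1 n"] by blast
  define P where "P = monom 1 n - g0"
  have degP: "degree P = n" unfolding P_def using g0(1) Suc
    by (subst degree_diff_eq_left) (auto simp: degree_monom_eq)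
  have cP: "coeff P n = 1" unfolding P_def using g0(1) Suc by (simp add: coeff_eq_0)
  show ?thesis using degP cP g0(2) Suc unfolding P_def
    by (intro exI[of _ P]) (auto simp: P_def)
qed

lemma orthonormal_poly_iff:
  "orthonormal_poly v n p \<longleftrightarrow> degree p = n \<and> lead_coeff p > 0
     \<and> (\<forall>q. degree q < n \<longrightarrow> IW v (p * q) = 0) \<and> IW v (p * p) = 1"
  unfolding orthonormal_poly_def IW_def by (simp add: mult_ac power2_eq_square)

lemma orthonormal_exists:
  assumes v: "weight_fun v"
  shows "\<exists>p. orthonormal_poly v n p"
proof -
  obtain P where P: "degree P = n" "lead_coeff P = 1" "\<And>q. degree q < n \<Longrightarrow> IW v (P * q) = 0"
    using monic_orth_exists[OF v] by blast
  have P0: "P \<noteq> 0" using P(2) by auto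
  have PP: "IW v (P * P) > 0"
    using IW_pos[OF v, of "P * P"] P0 by (simp add: zero_le_mult_iff)
  define c where "c = 1 / sqrt (IW v (P * P))"
  have c: "c > 0" using PP by (simp add: c_def)
  have "smult c P * smult c P = smult (c*c) (P * P)" by simp
  then have "IW v (smult c P * smult c P) = c^2 * IW v (P * P)"
    by (simp add: IW_smult power2_eq_square)
  also have "\<dots> = 1" using PP by (simp add: c_def power_divide)
  finally have n1: "IW v (smult c P * smult c P) = 1" .
  show ?thesis unfolding orthonormal_poly_iff using P c n1
    by (intro exI[of _ "smult c P"]) (auto simp: IW_smult)
qed

lemma orthonormal_unique:
  assumes v: "weight_fun v" and p1: "orthonormal_poly v n p1" and p2: "orthonormal_poly v n p2"
  shows "p1 = p2"
proof -
  note a1 = p1[unfolded orthonormal_poly_iff] and a2 = p2[unfolded orthonormal_poly_iff]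
  define c where "c = lead_coeff p1 / lead_coeff p2"
  have "lead_coeff p1 > 0" "lead_coeff p2 > 0" using a1 a2 by auto
  then have c: "c > 0" unfolding c_def by (rule divide_pos_pos)
  define r where "r = p1 - smult c p2"
  have r0: "r = 0"
  proof (rule ccontr)
    assume rne: "r \<noteq> 0"
    have "degree r \<le> n" unfolding r_def using a1 a2 by (intro degree_diff_le) auto
    moreover have "coeff r n = 0" unfolding r_def c_def using a1 a2 by auto
    ultimately have dr: "degree r < n" using degree_lt_from_coeff[OF _ _ rne] by blast
    have "r * r = p1 * r - smult c (p2 * r)"
      by (subst (1) r_def) (simp add: left_diff_distrib)
    then have "IW v (r * r) = IW v (p1 * r) - c * IW v (p2 * r)"
      using v by (simp add: IW_diff IW_smult)
    also have "\<dots> = 0" using a1 a2 dr by simp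
    finally have "IW v (r * r) = 0" .
    moreover have "IW v (r * r) > 0" using IW_pos[OF v, of "r * r"] rne by (simp add: zero_le_mult_iff)
    ultimately show False by simp
  qed
  then have pe: "p1 = smult c p2" unfolding r_def by simp
  have "1 = IW v (p1 * p1)" using a1 by simp
  also have "\<dots> = c^2 * IW v (p2 * p2)" unfolding pe
    by (simp add: IW_smult power2_eq_square)
  also have "\<dots> = c^2" using a2 by simp
  finally have "c = 1" using c by (simp add: power2_eq_1_iff)
  then show ?thesis using pe by simp
qed

lemma orthonormal_THE:
  assumes v: "weight_fun v"
  shows "orthonormal_poly v n (THE p. orthonormal_poly v n p)"
  using orthonormal_exists[OF v] orthonormal_unique[OF v] by (metis theI)


lemma sign_change_odd_root:
  fixes f :: "real poly"
  assumes "s < t" "poly f s * poly f t < 0"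
  shows "\<exists>r. s < r \<and> r < t \<and> poly f r = 0 \<and> odd (order r f)"
  using assms
proof (induction "degree f" arbitrary: f rule: less_induct)
  case less
  obtain r where r: "s < r" "r < t" "poly f r = 0" using poly_IVT[OF less.prems] by blast
  have f0: "f \<noteq> 0" using less.prems by auto
  obtain g where g: "f = [:-r,1:] ^ order r f * g" "\<not> [:-r,1:] dvd g"
    using order_decomp[OF f0] by blast
  show ?case
  proof (cases "odd (order r f)")
    case True then show ?thesis using r by blast
  next
    case False
    define k where "k = order r f"
    have k0: "k \<noteq> 0" using r f0 order_root unfolding k_def by blast
    have g0: "g \<noteq> 0" using g(2) by auto
    have gr: "poly g r \<noteq> 0" using g(2) poly_eq_0_iff_dvd by blast
    have fe: "f = [:-r,1:] ^ k * g" using g(1) by (simp add: k_def)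
    have lp0: "[:-r,1:] ^ k \<noteq> (0::real poly)" by simp
    have "degree f = degree ([:-r,1:] ^ k) + degree g"
      using degree_mult_eq[OF lp0 g0] fe by simp
    then have dg: "degree f = k + degree g" by (simp add: degree_linear_power)
    have "degree g < degree f" using dg k0 by simp
    moreover have "poly g s * poly g t < 0"
    proof -
      have ev: "even k" using False k_def by simp
      have ps: "(s - r) ^ k > 0" using ev r by (simp add: zero_less_power_eq)
      have pt: "(t - r) ^ k > 0" using ev r by (simp add: zero_less_power_eq)
      have e1: "poly f s = (s - r) ^ k * poly g s" by (subst fe) (simp add: poly_power)
      have e2: "poly f t = (t - r) ^ k * poly g t" by (subst fe) (simp add: poly_power)
      have "poly f s * poly f t = ((s - r) ^ k * (t - r) ^ k) * (poly g s * poly g t)"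
        unfolding e1 e2 by (simp add: algebra_simps)
      note eq = this
      have AB: "0 < (s-r)^k*(t-r)^k" using ps pt by simp
      show ?thesis
      proof (rule ccontr)
        assume "\<not> ?thesis"
        then have "0 \<le> poly g s * poly g t" by simp
        with AB have "0 \<le> poly f s * poly f t" unfolding eq by simp
        with less.prems(2) show False by simp
      qed
    qed
    ultimately obtain r' where r': "s < r'" "r' < t" "poly g r' = 0" "odd (order r' g)"
      using less.hyps[of g] less.prems(1) by blast
    have "r' \<noteq> r" using r' gr by auto
    then have "poly ([:-r,1:] ^ k) r' \<noteq> 0" by (simp add: poly_power)
    then have o0: "order r' ([:-r,1:] ^ k) = 0" by (rule order_0I)
    have "order r' f = order r' ([:-r,1:] ^ k) + order r' g"
      unfolding fe by (rule order_mult) (use lp0 g0 in simp)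
    then have "order r' f = order r' g" using o0 by simp
    moreover have "poly f r' = 0" using r' fe by simp
    ultimately show ?thesis using r' by auto
  qed
qed

lemma no_sign_change:
  fixes f :: "real poly"
  assumes "\<And>r. a < r \<Longrightarrow> r < b \<Longrightarrow> poly f r = 0 \<Longrightarrow> even (order r f)"
    and "s \<in> {a..b}" "t \<in> {a..b}"
  shows "poly f s * poly f t \<ge> 0"
proof (rule ccontr)
  assume "\<not> ?thesis"
  then have neg: "poly f s * poly f t < 0" by simp
  then have "s \<noteq> t" by auto
  have gen: False if st: "s' < t'" "poly f s' * poly f t' < 0" "s' \<in> {a..b}" "t' \<in> {a..b}" for s' t'
  proof -
    obtain r where r: "s' < r" "r < t'" "poly f r = 0" "odd (order r f)"
      using sign_change_odd_root[OF st(1,2)] by blast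
    have "a < r" "r < b" using r st(3,4) by auto
    then have "even (order r f)" using assms(1) r(3) by blast
    then show False using r(4) by simp
  qed
  from \<open>s \<noteq> t\<close> consider "s < t" | "t < s" by linarith
  then show False
  proof cases
    case 1 then show False using gen[of s t] neg assms(2,3) by blast
  next
    case 2 then show False using gen[of t s] neg assms(2,3) by (simp add: mult.commute)
  qed
qed

lemma no_sign_change':
  fixes f :: "real poly"
  assumes "\<And>r. a < r \<Longrightarrow> r < b \<Longrightarrow> poly f r = 0 \<Longrightarrow> even (order r f)"
  shows "(\<forall>t\<in>{a..b}. poly f t \<ge> 0) \<or> (\<forall>t\<in>{a..b}. poly f t \<le> 0)"
proof (cases "\<forall>t\<in>{a..b}. poly f t \<ge> 0")
  case False
  then obtain s where s1: "s \<in> {a..b}" "\<not> 0 \<le> poly f s" by blast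
  then have s: "s \<in> {a..b}" "poly f s < 0" by auto
  have "poly f t \<le> 0" if t: "t \<in> {a..b}" for t
  proof (rule ccontr)
    assume "\<not> poly f t \<le> 0"
    then have "poly f s * poly f t < 0" using s by (simp add: mult_neg_pos)
    then show False using no_sign_change[OF assms s(1) t] by linarith
  qed
  then show ?thesis by blast
qed simp

definition oddroots :: "real poly \<Rightarrow> real set" where
  "oddroots p = {r. -1 < r \<and> r < 1 \<and> poly p r = 0 \<and> odd (order r p)}"

definition linprod :: "real set \<Rightarrow> real poly" where
  "linprod R = (\<Prod>r\<in>R. [:-r,1:])"

lemma finite_oddroots: "p \<noteq> 0 \<Longrightarrow> finite (oddroots p)"
  unfolding oddroots_def by (rule finite_subset[OF _ poly_roots_finite]) auto

lemma poly_linprod: "poly (linprod R) t = (\<Prod>r\<in>R. t - r)"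
  unfolding linprod_def by (simp add: poly_prod)

lemma lin_nz: "[:-r,1:] \<noteq> (0::real poly)" by simp

lemma linprod_nz: "linprod R \<noteq> 0"
  unfolding linprod_def by (cases "finite R") (auto simp: prod_zero_iff)

lemma degree_linprod: "finite R \<Longrightarrow> degree (linprod R) = card R"
  unfolding linprod_def
  by (subst degree_prod_eq_sum_degree) auto

lemma lead_linprod: "lead_coeff (linprod R) = 1"
  unfolding linprod_def by (simp add: lead_coeff_prod)

lemma order_lin: "order r [:-s,1:] = (if r = s then 1 else 0)"
proof (cases "r = s")
  case True then show ?thesis using order_power_n_n[of s 1] by simp
next
  case False then show ?thesis by (intro order_0I[THEN trans]) auto
qed

lemma order_linprod: "finite R \<Longrightarrow> order r (linprod R) = (if r \<in> R then 1 else 0)"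
  unfolding linprod_def
proof (induction R rule: finite_induct)
  case (insert x F)
  have P0: "(\<Prod>r\<in>F. [:-r,1:]) \<noteq> (0::real poly)" using linprod_nz[of F] by (simp add: linprod_def)
  have "order r (\<Prod>r\<in>insert x F. [:-r,1:]) = order r ([:-x,1:] * (\<Prod>r\<in>F. [:-r,1:]))"
    by (simp only: prod.insert[OF insert(1,2)])
  also have "\<dots> = order r [:-x,1:] + order r (\<Prod>r\<in>F. [:-r,1:])"
    by (rule order_mult) (metis P0 lin_nz mult_eq_0_iff)
  finally show ?case using insert by (auto simp: order_lin)
qed simp

lemma orth_root_count:
  assumes v: "weight_fun v" and p0: "p \<noteq> 0"
    and orth: "\<And>q. degree q < m \<Longrightarrow> IW v (p * q) = 0"
  shows "card (oddroots p) \<ge> m"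
proof (rule ccontr)
  assume "\<not> ?thesis"
  then have lt: "card (oddroots p) < m" by simp
  define R where "R = oddroots p"
  have fR: "finite R" using finite_oddroots[OF p0] by (simp add: R_def)
  define f where "f = p * linprod R"
  have f0: "f \<noteq> 0" using p0 linprod_nz by (simp add: f_def)
  have "IW v f = 0" unfolding f_def using orth[of "linprod R"] degree_linprod[OF fR] lt
    by (simp add: R_def)
  have ev: "even (order r f)" if "-1 < r" "r < 1" "poly f r = 0" for r
  proof -
    have "order r f = order r p + (if r \<in> R then 1 else 0)"
      using f0 unfolding f_def by (simp add: order_mult order_linprod[OF fR] del: mult_eq_0_iff)
    then show ?thesis using that by (cases "poly p r = 0") (auto simp: R_def oddroots_def order_0I)
  qed
  from no_sign_change'[of "-1" 1 f] ev
  consider "\<forall>t\<in>{-1..1}. poly f t \<ge> 0" | "\<forall>t\<in>{-1..1}. poly f t \<le> 0" by blast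
  then show False
  proof cases
    case 1
    then have "IW v f > 0" using f0 by (intro IW_pos[OF v]) auto
    then show False using \<open>IW v f = 0\<close> by simp
  next
    case 2
    then have "IW v (-f) > 0" using f0 by (intro IW_pos[OF v]) auto
    then show False using \<open>IW v f = 0\<close> by (simp add: IW_minus)
  qed
qed

lemma factor_roots:
  fixes p :: "real poly"
  assumes "finite Z" "\<And>r. r \<in> Z \<Longrightarrow> poly p r = 0"
  shows "\<exists>g. p = linprod Z * g"
  using assms unfolding linprod_def
proof (induction Z arbitrary: p rule: finite_induct)
  case empty then show ?case by simp
next
  case (insert x F)
  obtain g where g: "p = (\<Prod>r\<in>F. [:-r,1:]) * g" using insert by blast
  have "poly (\<Prod>r\<in>F. [:-r,1:]) x \<noteq> 0" using insert(1,2) by (auto simp: poly_prod prod_zero_iff)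
  moreover have "poly p x = 0" using insert by auto
  ultimately have "poly g x = 0" using g by simp
  then obtain g' where "g = [:-x,1:] * g'" using poly_eq_0_iff_dvd by (metis dvdE)
  then have "p = (\<Prod>r\<in>insert x F. [:-r,1:]) * g'"
    using g by (simp only: prod.insert[OF insert(1,2)] mult_ac)
  then show ?case by blast
qed

lemma all_roots:
  fixes p :: "real poly"
  assumes p0: "p \<noteq> 0" and cnt: "card (oddroots p) \<ge> degree p"
  shows "{r. poly p r = 0} = oddroots p" "card (oddroots p) = degree p"
    "p = smult (lead_coeff p) (linprod (oddroots p))"
proof -
  have fO: "finite (oddroots p)" by (rule finite_oddroots[OF p0])
  have sub: "oddroots p \<subseteq> {r. poly p r = 0}" by (auto simp: oddroots_def)
  have cb: "card {r. poly p r = 0} \<le> degree p" by (rule card_poly_roots_bound[OF p0])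
  have fZ: "finite {r. poly p r = 0}" by (rule poly_roots_finite[OF p0])
  have "card (oddroots p) \<le> card {r. poly p r = 0}" by (rule card_mono[OF fZ sub])
  then show ceq: "card (oddroots p) = degree p" using cnt cb by simp
  show "{r. poly p r = 0} = oddroots p"
    using card_subset_eq[OF fZ sub] ceq cb \<open>card (oddroots p) \<le> _\<close> by simp
  obtain g where g: "p = linprod (oddroots p) * g"
    using factor_roots[OF fO, of p] by (auto simp: oddroots_def)
  have g0: "g \<noteq> 0" using p0 g by auto
  have "degree p = card (oddroots p) + degree g" using g g0 linprod_nz
    by (metis degree_linprod[OF fO] degree_mult_eq)
  then have "degree g = 0" using ceq by simp
  then obtain c where c: "g = [:c:]" by (metis degree_eq_zeroE)
  have "lead_coeff (linprod (oddroots p) * g) = c" by (simp add: lead_coeff_mult lead_linprod c)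
  then have "lead_coeff p = c" using g by metis
  then show "p = smult (lead_coeff p) (linprod (oddroots p))" using g c by simp
qed


lemma linprod_at1:
  assumes "finite R" "R \<subseteq> {-1<..<1}"
  shows "poly (linprod R) 1 > 0"
  unfolding poly_linprod using assms by (intro prod_pos) auto

lemma linprod_atm1:
  assumes "finite R" "R \<subseteq> {-1<..<1}"
  shows "poly (linprod R) (-1) = (-1) ^ card R * (\<Prod>r\<in>R. 1 + r)" "(\<Prod>r\<in>R. 1 + r) > 0"
proof -
  have "poly (linprod R) (-1) = (\<Prod>r\<in>R. (-1) * (1 + r))"
    unfolding poly_linprod by (intro prod.cong) auto
  also have "\<dots> = (-1) ^ card R * (\<Prod>r\<in>R. 1 + r)"
    unfolding prod.distrib by simp
  finally show "poly (linprod R) (-1) = (-1) ^ card R * (\<Prod>r\<in>R. 1 + r)" .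
  show "(\<Prod>r\<in>R. 1 + r) > 0" using assms by (intro prod_pos) auto
qed

lemma oddroots_sub: "oddroots p \<subseteq> {-1<..<1}"
  unfolding oddroots_def by auto

lemma root_count_endpoint:
  assumes v: "weight_fun v" and p0: "p \<noteq> 0" and dp: "degree p = n" and n1: "n \<ge> 1"
    and orth: "\<And>q. degree q < n - 1 \<Longrightarrow> IW v (p * q) = 0"
    and e1: "poly p 1 > 0" and e2: "(-1) ^ n * poly p (-1) > 0"
  shows "card (oddroots p) \<ge> n"
proof (rule ccontr)
  assume "\<not> ?thesis"
  moreover have "card (oddroots p) \<ge> n - 1" using orth_root_count[OF v p0 orth] .
  ultimately have k: "card (oddroots p) = n - 1" by simp
  define R where "R = oddroots p"
  have fR: "finite R" using finite_oddroots[OF p0] by (simp add: R_def)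
  have sR: "R \<subseteq> {-1<..<1}" using oddroots_sub by (simp add: R_def)
  define f where "f = p * linprod R"
  have f0: "f \<noteq> 0" using p0 linprod_nz by (simp add: f_def)
  have ev: "even (order r f)" if "-1 < r" "r < 1" "poly f r = 0" for r
  proof -
    have "order r f = order r p + (if r \<in> R then 1 else 0)"
      using f0 unfolding f_def by (simp add: order_mult order_linprod[OF fR] del: mult_eq_0_iff)
    then show ?thesis using that by (cases "poly p r = 0") (auto simp: R_def oddroots_def order_0I)
  qed
  have "poly f 1 * poly f (-1) \<ge> 0"
    by (rule no_sign_change[of "-1" 1 f]) (use ev in auto)
  moreover have "poly f 1 * poly f (-1) < 0"
  proof -
    have A: "poly (linprod R) 1 > 0" by (rule linprod_at1[OF fR sR])
    note B = linprod_atm1[OF fR sR]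
    have cR: "card R = n - 1" using k by (simp add: R_def)
    have "(-1) ^ (n - 1) * poly p (-1) < 0"
    proof -
      have "(-1::real) ^ n = - ((-1) ^ (n - 1))" using n1
        by (metis Suc_diff_1 less_le_trans mult_minus1 power_Suc zero_less_one)
      then show ?thesis using e2 by simp
    qed
    moreover have "poly p (-1) * poly (linprod R) (-1) = (\<Prod>r\<in>R. 1 + r) * ((-1) ^ (n - 1) * poly p (-1))"
      using B(1) cR by simp
    ultimately have "poly p (-1) * poly (linprod R) (-1) < 0"
      using B(2) mult_pos_neg by metis
    then have "poly f (-1) < 0" unfolding f_def by simp
    moreover have "poly f 1 > 0" unfolding f_def using A e1 by simp
    ultimately show ?thesis using mult_pos_neg by blast
  qed
  ultimately show False by simp
qed

definition goodp :: "real poly \<Rightarrow> nat \<Rightarrow> bool" where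
  "goodp p m \<longleftrightarrow> p \<noteq> 0 \<and> degree p = m \<and> lead_coeff p > 0 \<and> {r. poly p r = 0} \<subseteq> {-1<..<1}
     \<and> card {r. poly p r = 0} = m \<and> p = smult (lead_coeff p) (linprod {r. poly p r = 0})"

lemma goodpI:
  assumes "p \<noteq> 0" "degree p = m" "lead_coeff p > 0" "card (oddroots p) \<ge> m"
  shows "goodp p m"
  using all_roots[of p] assms oddroots_sub unfolding goodp_def by auto

lemma goodp_signs:
  assumes "goodp p m"
  shows "poly p 1 > 0" "(-1) ^ m * poly p (-1) > 0"
proof -
  define Z where "Z = {r. poly p r = 0}"
  have p0: "p \<noteq> 0" and fZ: "finite Z" and sZ: "Z \<subseteq> {-1<..<1}" and cZ: "card Z = m"
    and lc: "lead_coeff p > 0" and pe: "p = smult (lead_coeff p) (linprod Z)"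
    using assms poly_roots_finite[of p] unfolding goodp_def Z_def by auto
  have "poly p 1 = lead_coeff p * poly (linprod Z) 1" by (subst pe) simp
  then show "poly p 1 > 0" using lc linprod_at1[OF fZ sZ] by simp
  have "poly p (-1) = lead_coeff p * poly (linprod Z) (-1)" by (subst pe) simp
  then have "(-1) ^ m * poly p (-1) = lead_coeff p * (\<Prod>r\<in>Z. 1 + r)"
    using linprod_atm1(1)[OF fZ sZ] cZ by (simp add: mult_ac flip: power_add)
  then show "(-1) ^ m * poly p (-1) > 0" using lc linprod_atm1(2)[OF fZ sZ] by simp
qed


lemma poly_m1p1: "poly [:1,0,-1:] t = 1 - (t::real)^2"
  unfolding power2_eq_square by simp

lemma vps_eq: "(\<lambda>t::real. (1 - t^2) * (w t::real)) = (\<lambda>t. poly [:1,0,-1:] t * w t)"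
  by (simp only: poly_m1p1)

lemma sq_le1: "-1 \<le> t \<Longrightarrow> t \<le> 1 \<Longrightarrow> t * t \<le> (1::real)"
proof -
  assume "-1 \<le> t" "t \<le> 1"
  then have "\<bar>t\<bar> \<le> 1" by simp
  then have "\<bar>t\<bar> * \<bar>t\<bar> \<le> 1" by (intro mult_le_one) auto
  then show ?thesis by (simp add: abs_mult[symmetric])
qed

lemma m1p1_factor: "[:1,0,-1:] = [:1,-1:] * [:1,(1::real):]"
  by simp

locale ctx =
  fixes w :: "real \<Rightarrow> real" and n :: nat
  assumes wf: "weight_fun w" and n1: "n \<ge> 1"
begin

abbreviation "\<phi> \<equiv> phi w n"
abbreviation "\<psi> \<equiv> psi w n"

lemma wf_psi: "weight_fun (\<lambda>t. (1 - t^2) * w t)"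
  unfolding vps_eq by (rule weight_fun_mult[OF wf]) (auto simp: power2_eq_square sq_le1)

lemma IW_psi: "IW (\<lambda>t. (1 - t^2) * w t) p = IW w ([:1,0,-1:] * p)"
  unfolding vps_eq by (rule IW_mult_weight)

lemma phi_on: "orthonormal_poly w n \<phi>"
  unfolding phi_def by (rule orthonormal_THE[OF wf])

lemma psi_on: "orthonormal_poly (\<lambda>t. (1 - t^2) * w t) (n - 1) \<psi>"
  unfolding psi_def by (rule orthonormal_THE[OF wf_psi])

lemma phi_orth: "degree q < n \<Longrightarrow> IW w (\<phi> * q) = 0"
  using phi_on unfolding orthonormal_poly_iff by blast

lemma psi_orth: "degree q < n - 1 \<Longrightarrow> IW w ([:1,0,-1:] * \<psi> * q) = 0"
proof -
  assume "degree q < n - 1"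
  then have "IW (\<lambda>t. (1 - t^2) * w t) (\<psi> * q) = 0" using psi_on unfolding orthonormal_poly_iff by blast
  then show ?thesis by (simp only: IW_psi mult.assoc)
qed

lemma phi_deg: "degree \<phi> = n" and phi_lc: "lead_coeff \<phi> > 0"
  using phi_on unfolding orthonormal_poly_iff by auto

lemma psi_deg: "degree \<psi> = n - 1" and psi_lc: "lead_coeff \<psi> > 0"
  using psi_on unfolding orthonormal_poly_iff by auto

lemma phi_nz: "\<phi> \<noteq> 0" using phi_lc by auto
lemma psi_nz: "\<psi> \<noteq> 0" using psi_lc by auto

lemma phi_good: "goodp \<phi> n"
  by (rule goodpI[OF phi_nz phi_deg phi_lc]) (rule orth_root_count[OF wf phi_nz phi_orth])

lemma psi_good: "goodp \<psi> (n - 1)"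
  by (rule goodpI[OF psi_nz psi_deg psi_lc])
     (rule orth_root_count[OF wf_psi psi_nz], use psi_on in \<open>simp add: orthonormal_poly_iff\<close>)

lemma phi_1: "poly \<phi> 1 > 0" and phi_m1: "(-1) ^ n * poly \<phi> (-1) > 0"
  using goodp_signs[OF phi_good] by auto

lemma psi_1: "poly \<psi> 1 > 0" and psi_m1: "(-1) ^ (n - 1) * poly \<psi> (-1) > 0"
  using goodp_signs[OF psi_good] by auto

lemma phi_psi_m1: "poly \<phi> (-1) * poly \<psi> (-1) < 0"
proof -
  have "((-1) ^ n * poly \<phi> (-1)) * ((-1) ^ (n - 1) * poly \<psi> (-1)) > 0"
    using phi_m1 psi_m1 by simp
  moreover have "(-1::real) ^ n * (-1) ^ (n - 1) = -1"
  proof -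
    have "(-1::real) ^ n * (-1) ^ (n - 1) = (-1) ^ (n + (n - 1))" by (simp add: power_add)
    also have "n + (n - 1) = Suc (2 * (n - 1))" using n1 by simp
    finally show ?thesis by simp
  qed
  moreover have "((-1) ^ n * poly \<phi> (-1)) * ((-1) ^ (n - 1) * poly \<psi> (-1))
      = ((-1::real) ^ n * (-1) ^ (n - 1)) * (poly \<phi> (-1) * poly \<psi> (-1))"
    by (simp only: mult_ac)
  ultimately show ?thesis by simp
qed

lemma Pa_pos: "a \<ge> 0 \<Longrightarrow> Pa w n a = \<phi> - smult a ([:1,-1:] * \<psi>)"
  unfolding Pa_def by simp

lemma Pa_neg: "a < 0 \<Longrightarrow> Pa w n a = \<phi> - smult a ([:1,1:] * \<psi>)"
  unfolding Pa_def by simp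

lemma poly_Pa_pos: "a \<ge> 0 \<Longrightarrow> poly (Pa w n a) t = poly \<phi> t - a * (1 - t) * poly \<psi> t"
  by (simp add: Pa_pos algebra_simps)

lemma poly_Pa_neg: "a < 0 \<Longrightarrow> poly (Pa w n a) t = poly \<phi> t - a * (1 + t) * poly \<psi> t"
  by (simp add: Pa_neg algebra_simps)

lemma deg_lc_aux:
  fixes L :: "real poly"
  assumes "degree L = 1"
  shows "degree (\<phi> - smult a (L * \<psi>)) \<le> n"
    "coeff (\<phi> - smult a (L * \<psi>)) n = lead_coeff \<phi> - a * lead_coeff L * lead_coeff \<psi>"
proof -
  have L0: "L \<noteq> 0" using assms by auto
  have dL: "degree (L * \<psi>) = n" using degree_mult_eq[OF L0 psi_nz] assms psi_deg n1 by simp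
  show "degree (\<phi> - smult a (L * \<psi>)) \<le> n"
    using dL phi_deg by (intro degree_diff_le) (auto intro: order_trans[OF degree_smult_le])
  have "coeff (L * \<psi>) n = lead_coeff L * lead_coeff \<psi>"
    using dL by (metis lead_coeff_mult)
  then show "coeff (\<phi> - smult a (L * \<psi>)) n = lead_coeff \<phi> - a * lead_coeff L * lead_coeff \<psi>"
    using phi_deg by simp
qed

lemma Pa_deg_lc: "degree (Pa w n a) = n \<and> lead_coeff (Pa w n a) > 0"
proof -
  define L :: "real poly" where "L = (if a \<ge> 0 then [:1,-1:] else [:1,1:])"
  have PL: "Pa w n a = \<phi> - smult a (L * \<psi>)" unfolding L_def Pa_def by simp
  have dL: "degree L = 1" unfolding L_def by simp
  have c: "coeff (Pa w n a) n > 0"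
  proof -
    have "coeff (Pa w n a) n = lead_coeff \<phi> - a * lead_coeff L * lead_coeff \<psi>"
      unfolding PL by (rule deg_lc_aux(2)[OF dL])
    moreover have "- a * lead_coeff L \<ge> 0" unfolding L_def by auto
    ultimately show ?thesis using phi_lc psi_lc
      by (smt (verit) mult_nonneg_nonneg mult_minus_left)
  qed
  have d: "degree (Pa w n a) \<le> n" unfolding PL by (rule deg_lc_aux(1)[OF dL])
  have "degree (Pa w n a) = n" using d c by (metis le_antisym le_degree less_irrefl)
  then show ?thesis using c by simp
qed

lemma Pa_nz: "Pa w n a \<noteq> 0"
  using Pa_deg_lc[of a] by auto

lemma wf_1p: "weight_fun (\<lambda>t. poly [:1,1:] t * w t)"
  by (rule weight_fun_mult[OF wf]) auto

lemma wf_1m: "weight_fun (\<lambda>t. poly [:1,-1:] t * w t)"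
  by (rule weight_fun_mult[OF wf]) auto

lemma Pa_quasi_pos:
  assumes "a > 0" "degree q < n - 1"
  shows "IW w ([:1,1:] * Pa w n a * q) = 0"
proof -
  have "degree ([:1,1:] * q) \<le> 1 + degree q" using degree_mult_le[of "[:1,1:]" q] by simp
  then have d1: "degree ([:1,1:] * q) < n" using assms(2) by linarith
  have "[:1,1:] * Pa w n a * q = \<phi> * ([:1,1:] * q) - smult a ([:1,0,-1:] * \<psi> * q)"
    using assms(1) by (simp add: Pa_pos algebra_simps smult_diff_right)
  then show ?thesis using wf phi_orth[OF d1] psi_orth[OF assms(2)]
    by (simp add: IW_diff IW_smult)
qed

lemma Pa_quasi_neg:
  assumes "a < 0" "degree q < n - 1"
  shows "IW w ([:1,-1:] * Pa w n a * q) = 0"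
proof -
  have "degree ([:1,-1:] * q) \<le> 1 + degree q" using degree_mult_le[of "[:1,-1:]" q] by simp
  then have d1: "degree ([:1,-1:] * q) < n" using assms(2) by linarith
  have "[:1,-1:] * Pa w n a * q = \<phi> * ([:1,-1:] * q) - smult a ([:1,0,-1:] * \<psi> * q)"
    using assms(1) by (simp add: Pa_neg algebra_simps smult_diff_right)
  then show ?thesis using wf phi_orth[OF d1] psi_orth[OF assms(2)]
    by (simp add: IW_diff IW_smult)
qed

lemma pow_m1: "(-1::real) ^ n = - ((-1) ^ (n - 1))"
proof -
  have "n = Suc (n - 1)" using n1 by simp
  then have "(-1::real) ^ n = (-1) ^ Suc (n - 1)" by metis
  then show ?thesis by simp
qed

lemma Pa_1: "poly (Pa w n a) 1 > 0"
proof (cases "a \<ge> 0")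
  case True then show ?thesis using phi_1 by (simp add: poly_Pa_pos)
next
  case False
  then have "poly (Pa w n a) 1 = poly \<phi> 1 + (- a) * 2 * poly \<psi> 1" by (simp add: poly_Pa_neg)
  moreover have "(- a) * 2 * poly \<psi> 1 > 0" using False psi_1 by (simp add: mult_neg_pos not_le)
  ultimately show ?thesis using phi_1 by simp
qed

lemma Pa_m1: "(-1) ^ n * poly (Pa w n a) (-1) > 0"
proof (cases "a \<ge> 0")
  case True
  have "(-1) ^ n * poly (Pa w n a) (-1) = (-1) ^ n * poly \<phi> (-1) + 2 * a * ((-1) ^ (n - 1) * poly \<psi> (-1))"
    using True by (simp add: poly_Pa_pos pow_m1 algebra_simps)
  moreover have "2 * a * ((-1) ^ (n - 1) * poly \<psi> (-1)) \<ge> 0" using True psi_m1 by simp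
  ultimately show ?thesis using phi_m1 by linarith
next
  case False then show ?thesis using phi_m1 by (simp add: poly_Pa_neg)
qed

lemma Pa_good: "goodp (Pa w n a) n"
proof -
  have P0: "Pa w n a \<noteq> 0" by (rule Pa_nz)
  have dP: "degree (Pa w n a) = n" and lP: "lead_coeff (Pa w n a) > 0" using Pa_deg_lc[of a] by auto
  have "card (oddroots (Pa w n a)) \<ge> n"
  proof (cases "a > 0")
    case True
    show ?thesis
    proof (rule root_count_endpoint[OF wf_1p P0 dP n1 _ Pa_1 Pa_m1])
      fix q :: "real poly" assume "degree q < n - 1"
      then show "IW (\<lambda>t. poly [:1,1:] t * w t) (Pa w n a * q) = 0"
        using Pa_quasi_pos[OF True] by (simp only: IW_mult_weight mult.assoc)
    qed
  next
    case False
    show ?thesis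
    proof (cases "a = 0")
      case True
      then have "Pa w n a = \<phi>" by (simp add: Pa_pos)
      then show ?thesis using orth_root_count[OF wf phi_nz phi_orth] by simp
    next
      case False
      with \<open>\<not> a > 0\<close> have an: "a < 0" by simp
      show ?thesis
      proof (rule root_count_endpoint[OF wf_1m P0 dP n1 _ Pa_1 Pa_m1])
        fix q :: "real poly" assume "degree q < n - 1"
        then show "IW (\<lambda>t. poly [:1,-1:] t * w t) (Pa w n a * q) = 0"
          using Pa_quasi_neg[OF an] by (simp only: IW_mult_weight mult.assoc)
      qed
    qed
  qed
  then show ?thesis by (rule goodpI[OF P0 dP lP])
qed

end


definition lag :: "real set \<Rightarrow> real \<Rightarrow> real poly" where
  "lag S s = smult (1 / (\<Prod>u\<in>S - {s}. s - u)) (linprod (S - {s}))"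

lemma poly_lag: "poly (lag S s) t = (\<Prod>u\<in>S - {s}. t - u) / (\<Prod>u\<in>S - {s}. s - u)"
  unfolding lag_def by (simp add: poly_linprod)

lemma lag_self: "finite S \<Longrightarrow> poly (lag S s) s = 1"
  unfolding poly_lag by (simp add: prod_zero_iff)

lemma lag_other: "finite S \<Longrightarrow> u \<in> S \<Longrightarrow> u \<noteq> s \<Longrightarrow> poly (lag S s) u = 0"
  unfolding poly_lag by (auto simp: prod_zero_iff)

lemma degree_lag: "finite S \<Longrightarrow> s \<in> S \<Longrightarrow> degree (lag S s) = card S - 1"
proof -
  assume "finite S" "s \<in> S"
  moreover have "(\<Prod>u\<in>S - {s}. s - u) \<noteq> 0" using \<open>finite S\<close> by (simp add: prod_zero_iff)
  ultimately show ?thesis unfolding lag_def by (simp add: degree_linprod)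
qed

lemma poly_sum_lag:
  assumes "finite S" "u \<in> S"
  shows "poly (\<Sum>s\<in>S. smult (f s) (lag S s)) u = f u"
proof -
  have "poly (\<Sum>s\<in>S. smult (f s) (lag S s)) u = (\<Sum>s\<in>S. f s * poly (lag S s) u)"
    by (simp add: poly_sum)
  also have "\<dots> = (\<Sum>s\<in>S. if s = u then f s else 0)"
    using assms by (intro sum.cong) (auto simp: lag_self lag_other)
  also have "\<dots> = f u" using assms by simp
  finally show ?thesis .
qed

lemma interpolation:
  assumes fS: "finite S" and dr: "degree r < card S"
  shows "r = (\<Sum>s\<in>S. smult (poly r s) (lag S s))"
proof (rule ccontr)
  define d where "d = r - (\<Sum>s\<in>S. smult (poly r s) (lag S s))"
  assume "r \<noteq> (\<Sum>s\<in>S. smult (poly r s) (lag S s))"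
  then have d0: "d \<noteq> 0" by (simp add: d_def)
  have "S \<noteq> {}" using dr by auto
  have "degree (\<Sum>s\<in>S. smult (poly r s) (lag S s)) \<le> card S - 1"
    using fS by (intro degree_sum_le) (auto intro: order_trans[OF degree_smult_le] simp: degree_lag)
  moreover have "card S > 0" using fS \<open>S \<noteq> {}\<close> by (simp add: card_gt_0_iff)
  ultimately have "degree (\<Sum>s\<in>S. smult (poly r s) (lag S s)) < card S" by linarith
  then have dd: "degree d < card S" unfolding d_def using dr
    by (intro degree_diff_less) auto
  have "S \<subseteq> {x. poly d x = 0}" using fS unfolding d_def by (auto simp: poly_sum_lag)
  then have "card S \<le> card {x. poly d x = 0}" using poly_roots_finite[OF d0] by (rule card_mono[rotated])
  also have "\<dots> \<le> degree d" by (rule card_poly_roots_bound[OF d0])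
  finally show False using dd by simp
qed

definition exact_on :: "(real \<Rightarrow> real) \<Rightarrow> nat \<Rightarrow> real set \<Rightarrow> (real \<Rightarrow> real) \<Rightarrow> bool" where
  "exact_on w n S c \<longleftrightarrow> (\<forall>p::real poly. degree p \<le> 2*n - 1 \<longrightarrow>
          (\<Sum>s\<in>S. c s * poly p s) = IW w p)"

lemma pos_quadratureI:
  "finite S \<Longrightarrow> (\<forall>s\<in>S. c s > 0) \<Longrightarrow> exact_on w n S c \<Longrightarrow> pos_quadrature w n S c"
  unfolding pos_quadrature_def exact_on_def IW_def by blast

lemma pos_quadratureD:
  "pos_quadrature w n S c \<Longrightarrow> finite S \<and> (\<forall>s\<in>S. c s > 0) \<and> exact_on w n S c"
  unfolding pos_quadrature_def exact_on_def IW_def by blast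

lemma quad_exact:
  assumes wf: "weight_fun w" and fS: "finite S" and cS: "card S = m" and m1: "m \<ge> 1"
    and dD: "degree D = m" and D0: "\<And>s. s \<in> S \<Longrightarrow> poly D s = 0"
    and orth: "\<And>q. q \<noteq> 0 \<Longrightarrow> m + degree q \<le> 2*n - 1 \<Longrightarrow> IW w (D * q) = 0"
  shows "exact_on w n S (\<lambda>s. IW w (lag S s))"
  unfolding exact_on_def
proof (intro allI impI)
  fix p :: "real poly" assume dp: "degree p \<le> 2*n - 1"
  have Dnz: "D \<noteq> 0" using dD m1 by auto
  define q where "q = p div D"
  define r where "r = p mod D"
  have pe: "p = D * q + r" unfolding q_def r_def by (simp add: mult.commute)
  have dr: "degree r < m"
    using degree_mod_less[OF Dnz, of p] dD m1 unfolding r_def by auto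
  have "(\<Sum>s\<in>S. IW w (lag S s) * poly p s) = (\<Sum>s\<in>S. poly r s * IW w (lag S s))"
    using D0 by (intro sum.cong) (auto simp: pe)
  also have "\<dots> = IW w (\<Sum>s\<in>S. smult (poly r s) (lag S s))"
    using wf by (simp add: IW_sum IW_smult)
  also have "\<dots> = IW w r" using interpolation[OF fS, of r] dr cS by simp
  also have "\<dots> = IW w p"
  proof (cases "q = 0")
    case True then show ?thesis by (simp add: pe)
  next
    case False
    have dDq: "degree (D * q) = m + degree q" using degree_mult_eq[OF Dnz False] dD by simp
    then have "degree p = m + degree q" unfolding pe using dr
      by (simp add: degree_add_eq_left)
    then have "IW w (D * q) = 0" using orth[OF False] dp by simp
    then show ?thesis using wf by (simp add: pe IW_add)
  qed
  finally show "(\<Sum>s\<in>S. IW w (lag S s) * poly p s) = IW w p" .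
qed

lemma exact_weight:
  assumes ex: "exact_on w n S c" and fS: "finite S" and sS: "s \<in> S"
    and dg: "degree g \<le> 2*n - 1" and z: "\<And>u. u \<in> S \<Longrightarrow> u \<noteq> s \<Longrightarrow> poly g u = 0"
  shows "c s * poly g s = IW w g"
proof -
  have "IW w g = (\<Sum>u\<in>S. c u * poly g u)" using ex dg unfolding exact_on_def by simp
  also have "\<dots> = (\<Sum>u\<in>S. if u = s then c s * poly g s else 0)"
    using z by (intro sum.cong) auto
  also have "\<dots> = c s * poly g s" using fS sS by simp
  finally show ?thesis by simp
qed


lemma weight_pos:
  assumes wf: "weight_fun w" and ex: "exact_on w n S c" and fS: "finite S" and sS: "s \<in> S"
    and dg: "degree g \<le> 2*n - 1" and z: "\<And>u. u \<in> S \<Longrightarrow> u \<noteq> s \<Longrightarrow> poly g u = 0"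
    and gs: "poly g s > 0" and gnn: "\<And>t. t \<in> {-1<..<1} \<Longrightarrow> poly g t \<ge> 0"
  shows "c s > 0"
proof -
  have g0: "g \<noteq> 0" using gs by auto
  have "c s * poly g s = IW w g" by (rule exact_weight[OF ex fS sS dg z])
  moreover have "IW w g > 0" by (rule IW_pos[OF wf g0 gnn])
  ultimately have "0 < c s * poly g s" by simp
  then show ?thesis by (rule zero_less_mult_pos2[OF _ gs])
qed

lemma mult_const_right: "(X::real poly) * [:c:] = smult c X" by simp

lemma nn_times_sq:
  fixes L q :: "real poly"
  assumes "0 \<le> poly L t"
  shows "0 \<le> poly (L * q^2) t"
proof -
  have "poly (L * q^2) t = poly L t * (poly q t)^2" by (simp only: poly_mult poly_power)
  then show ?thesis using assms by simp
qed

lemma pos_from_neg: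
  fixes c X Y :: real
  assumes "c * X = Y" "Y < 0" "X < 0"
  shows "c > 0"
proof (rule ccontr)
  assume "\<not> c > 0"
  then have "c \<le> 0" by simp
  then have "c * X \<ge> 0" using assms(3) by (simp add: mult_nonpos_nonpos)
  then show False using assms by linarith
qed

lemma pos_from_pos:
  fixes c X Y :: real
  assumes "c * X = Y" "Y > 0" "X > 0"
  shows "c > 0"
  using assms by (metis zero_less_mult_pos2)

lemma degree_lag_sq:
  assumes "finite S" "s \<in> S"
  shows "degree ((lag S s)^2) = 2 * (card S - 1)"
proof -
  have l0: "lag S s \<noteq> 0" using lag_self[OF assms(1), of s] by auto
  show ?thesis by (simp add: power2_eq_square degree_mult_eq[OF l0 l0] degree_lag[OF assms])
qed

context ctx
begin

definition Zphi where "Zphi = {t. poly \<phi> t = 0}"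
definition Zpsi where "Zpsi = {t. poly \<psi> t = 0}"
definition ZP where "ZP a = {t. poly (Pa w n a) t = 0}"

lemma goodp_facts:
  assumes "goodp p m"
  shows "finite {t. poly p t = 0}" "card {t. poly p t = 0} = m" "{t. poly p t = 0} \<subseteq> {-1<..<1}"
  using assms poly_roots_finite[of p] unfolding goodp_def by auto

lemma Zphi: "finite Zphi" "card Zphi = n" "Zphi \<subseteq> {-1<..<1}"
  using goodp_facts[OF phi_good] unfolding Zphi_def by auto

lemma Zpsi: "finite Zpsi" "card Zpsi = n - 1" "Zpsi \<subseteq> {-1<..<1}"
  using goodp_facts[OF psi_good] unfolding Zpsi_def by auto

lemma ZP: "finite (ZP a)" "card (ZP a) = n" "ZP a \<subseteq> {-1<..<1}"
  using goodp_facts[OF Pa_good] unfolding ZP_def by auto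

lemma lag_sq_nn: "poly ((lag S s)^2) t \<ge> 0" by simp

definition cG where "cG s = IW w (lag Zphi s)"

lemma gauss_exact: "exact_on w n Zphi cG"
  unfolding cG_def
proof (rule quad_exact[OF wf Zphi(1) Zphi(2) n1 phi_deg])
  show "\<And>s. s \<in> Zphi \<Longrightarrow> poly \<phi> s = 0" by (simp add: Zphi_def)
  fix q :: "real poly" assume "q \<noteq> 0" "n + degree q \<le> 2 * n - 1"
  then have "degree q < n" using n1 by linarith
  then show "IW w (\<phi> * q) = 0" by (rule phi_orth)
qed

lemma gauss_pos: "pos_quadrature w n Zphi cG"
proof (rule pos_quadratureI[OF Zphi(1) _ gauss_exact], intro ballI)
  fix s assume s: "s \<in> Zphi"
  show "cG s > 0"
  proof (rule weight_pos[OF wf gauss_exact Zphi(1) s, of "(lag Zphi s)^2"])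
    show "degree ((lag Zphi s)^2) \<le> 2 * n - 1"
      using degree_lag_sq[OF Zphi(1) s] Zphi(2) n1 by simp
    show "\<And>u. u \<in> Zphi \<Longrightarrow> u \<noteq> s \<Longrightarrow> poly ((lag Zphi s)^2) u = 0"
      using Zphi(1) by (simp add: lag_other)
    show "poly ((lag Zphi s)^2) s > 0" using Zphi(1) by (simp add: lag_self)
  qed simp
qed

lemma psi_nz_m1: "poly \<psi> (-1) \<noteq> 0" and psi_nz_1: "poly \<psi> 1 \<noteq> 0"
  using Zpsi(3) unfolding Zpsi_def by auto

lemma nn_pos:
  assumes "g \<noteq> 0" "\<And>t. t \<in> {-1<..<1} \<Longrightarrow> poly g t \<ge> 0"
  shows "IW w g > 0"
  by (rule IW_pos[OF wf assms])

lemma K_aux: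
  assumes "L \<noteq> 0" "\<And>t. t \<in> {-1<..<1} \<Longrightarrow> poly L t \<ge> 0"
  shows "IW w (L * \<psi> * \<psi>) > 0"
proof (rule nn_pos)
  show "L * \<psi> * \<psi> \<noteq> 0" using psi_nz assms(1) by (simp only: mult_eq_0_iff) simp
  fix t :: real assume "t \<in> {-1<..<1}"
  then have "poly L t \<ge> 0" by (rule assms(2))
  moreover have "poly \<psi> t * poly \<psi> t \<ge> 0" by simp
  ultimately show "poly (L * \<psi> * \<psi>) t \<ge> 0" by (simp only: poly_mult mult.assoc mult_nonneg_nonneg)
qed

lemma K1: "IW w ([:1,-1:] * \<psi> * \<psi>) > 0"
  by (rule K_aux) auto

lemma K2: "IW w ([:1,1:] * \<psi> * \<psi>) > 0"
  by (rule K_aux) auto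

lemma psi_id_m1: "IW w ([:1,-1:] * \<psi> * \<psi>) = poly \<psi> (-1) * IW w ([:1,-1:] * \<psi>)"
proof -
  define c where "c = poly \<psi> (-1)"
  have "poly (\<psi> - [:c:]) (-1) = 0" by (simp add: c_def)
  then have "[:1,1:] dvd (\<psi> - [:c:])" using poly_eq_0_iff_dvd[of "\<psi> - [:c:]" "-1"] by simp
  then obtain s where se: "\<psi> - [:c:] = [:1,1:] * s" by (elim dvdE)
  have o: "IW w ([:1,0,-1:] * \<psi> * s) = 0"
  proof (cases "s = 0")
    case False
    have "degree ([:1,1:] * s) = 1 + degree s" using degree_mult_eq[of "[:1,1:]" s] False by simp
    moreover have "degree (\<psi> - [:c:]) \<le> n - 1" using psi_deg by (intro degree_diff_le) auto
    ultimately have "degree s < n - 1" using se by simp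
    then show ?thesis by (rule psi_orth)
  qed simp
  have "[:1,0,-1:] * \<psi> * s = [:1,-1:] * \<psi> * ([:1,1:] * s)" by (simp only: m1p1_factor mult_ac)
  also have "\<dots> = [:1,-1:] * \<psi> * (\<psi> - [:c:])" by (simp only: se)
  also have "\<dots> = [:1,-1:] * \<psi> * \<psi> - smult c ([:1,-1:] * \<psi>)"
    by (simp only: right_diff_distrib mult_const_right)
  finally have "IW w ([:1,-1:] * \<psi> * \<psi> - smult c ([:1,-1:] * \<psi>)) = 0" using o by simp
  then show ?thesis using wf by (simp add: IW_diff IW_smult c_def)
qed

lemma psi_id_1: "IW w ([:1,1:] * \<psi> * \<psi>) = poly \<psi> 1 * IW w ([:1,1:] * \<psi>)"
proof -
  define c where "c = poly \<psi> 1"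
  have "poly (\<psi> - [:c:]) 1 = 0" by (simp add: c_def)
  then have "[:-1,1:] dvd (\<psi> - [:c:])" using poly_eq_0_iff_dvd[of "\<psi> - [:c:]" "1"] by simp
  then obtain s where se: "\<psi> - [:c:] = [:-1,1:] * s" by (elim dvdE)
  have o: "IW w ([:1,0,-1:] * \<psi> * s) = 0"
  proof (cases "s = 0")
    case False
    have "degree ([:-1,1:] * s) = 1 + degree s" using degree_mult_eq[of "[:-1,1:]" s] False by simp
    moreover have "degree (\<psi> - [:c:]) \<le> n - 1" using psi_deg by (intro degree_diff_le) auto
    ultimately have "degree s < n - 1" using se by simp
    then show ?thesis by (rule psi_orth)
  qed simp
  have f: "[:1,0,-1:] = - ([:1,1:] * [:-1,(1::real):])" by simp
  have "[:1,0,-1:] * \<psi> * s = - ([:1,1:] * \<psi> * ([:-1,1:] * s))" by (simp only: f mult_ac minus_mult_left)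
  also have "\<dots> = - ([:1,1:] * \<psi> * (\<psi> - [:c:]))" by (simp only: se)
  also have "\<dots> = - ([:1,1:] * \<psi> * \<psi> - smult c ([:1,1:] * \<psi>))"
    by (simp only: right_diff_distrib mult_const_right)
  finally have eq: "[:1,0,-1:] * \<psi> * s = - ([:1,1:] * \<psi> * \<psi> - smult c ([:1,1:] * \<psi>))" .
  from o have "IW w (- ([:1,1:] * \<psi> * \<psi> - smult c ([:1,1:] * \<psi>))) = 0" by (simp only: eq)
  then have "IW w ([:1,1:] * \<psi> * \<psi> - smult c ([:1,1:] * \<psi>)) = 0" by (simp only: IW_minus neg_equal_0_iff_equal)
  then show ?thesis using wf by (simp add: IW_diff IW_smult c_def)
qed

lemma IW_phi: "IW w \<phi> = 0"
  using phi_orth[of 1] n1 by simp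

lemma IW_Pa_pos: "a \<ge> 0 \<Longrightarrow> IW w (Pa w n a) = - a * IW w ([:1,-1:] * \<psi>)"
  using wf by (simp add: Pa_pos IW_diff IW_smult IW_phi)

lemma IW_Pa_neg: "a < 0 \<Longrightarrow> IW w (Pa w n a) = - a * IW w ([:1,1:] * \<psi>)"
  using wf by (simp add: Pa_neg IW_diff IW_smult IW_phi)

definition SRp where "SRp a = insert (-1) (ZP a)"
definition cRp where "cRp a s = IW w (lag (SRp a) s)"

lemma SRp: "finite (SRp a)" "card (SRp a) = n + 1" "SRp a \<subseteq> {-1..<1}"
proof -
  have "-1 \<notin> ZP a" using ZP(3)[of a] by auto
  then show "finite (SRp a)" "card (SRp a) = n + 1" using ZP(1,2) by (auto simp: SRp_def)
  have "ZP a \<subseteq> {-1..<1}" using ZP(3)[of a] by auto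
  then show "SRp a \<subseteq> {-1..<1}" by (simp add: SRp_def)
qed

lemma Rp_exact:
  assumes a: "a > 0"
  shows "exact_on w n (SRp a) (cRp a)"
  unfolding cRp_def[abs_def]
proof (rule quad_exact[OF wf SRp(1) SRp(2), where D = "[:1,1:] * Pa w n a"])
  show "1 \<le> n + 1" by simp
  show "degree ([:1,1:] * Pa w n a) = n + 1"
    using degree_mult_eq[OF _ Pa_nz, of "[:1,1:]" a] Pa_deg_lc[of a] by simp
  show "\<And>s. s \<in> SRp a \<Longrightarrow> poly ([:1,1:] * Pa w n a) s = 0"
    by (auto simp: SRp_def ZP_def)
  fix q :: "real poly" assume "q \<noteq> 0" "n + 1 + degree q \<le> 2 * n - 1"
  then have "degree q < n - 1" by linarith
  then show "IW w ([:1,1:] * Pa w n a * q) = 0" by (rule Pa_quasi_pos[OF a])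
qed

lemma Rp_pos:
  assumes a: "a > 0"
  shows "pos_quadrature w n (SRp a) (cRp a)"
proof (rule pos_quadratureI[OF SRp(1) _ Rp_exact[OF a]], intro ballI)
  note ex = Rp_exact[OF a]
  fix s assume s: "s \<in> SRp a"
  show "cRp a s > 0"
  proof (cases "s = -1")
    case False
    then have sZ: "s \<in> ZP a" using s by (simp add: SRp_def)
    have sr: "-1 < s" "s < 1" using sZ ZP(3)[of a] by auto
    show ?thesis
    proof (rule weight_pos[OF wf ex SRp(1) s, of "[:1,1:] * (lag (ZP a) s)^2"])
      have "degree ([:1,1:] * (lag (ZP a) s)^2) \<le> 1 + degree ((lag (ZP a) s)^2)"
        using degree_mult_le[of "[:1,1:]" "(lag (ZP a) s)^2"] by simp
      then show "degree ([:1,1:] * (lag (ZP a) s)^2) \<le> 2 * n - 1"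
        using degree_lag_sq[OF ZP(1) sZ] ZP(2) n1 by simp
      show "\<And>u. u \<in> SRp a \<Longrightarrow> u \<noteq> s \<Longrightarrow> poly ([:1,1:] * (lag (ZP a) s)^2) u = 0"
        using ZP(1) by (auto simp: SRp_def lag_other)
      show "poly ([:1,1:] * (lag (ZP a) s)^2) s > 0" using ZP(1) sr by (simp add: lag_self)
      show "\<And>t. t \<in> {-1<..<1} \<Longrightarrow> poly ([:1,1:] * (lag (ZP a) s)^2) t \<ge> 0"
        by (rule nn_times_sq) simp
    qed
  next
    case True
    have m1: "-1 \<in> SRp a" by (simp add: SRp_def)
    have "cRp a (-1) * poly (Pa w n a) (-1) = IW w (Pa w n a)"
    proof (rule exact_weight[OF ex SRp(1) m1])
      show "degree (Pa w n a) \<le> 2 * n - 1" using Pa_deg_lc[of a] n1 by simp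
    qed (auto simp: SRp_def ZP_def)
    also have "\<dots> = - a * IW w ([:1,-1:] * \<psi>)" using a by (simp add: IW_Pa_pos)
    finally have e: "cRp a (-1) * poly (Pa w n a) (-1) = - a * IW w ([:1,-1:] * \<psi>)" .
    have "cRp a (-1) * (poly (Pa w n a) (-1) * poly \<psi> (-1)) = (cRp a (-1) * poly (Pa w n a) (-1)) * poly \<psi> (-1)"
      by (simp only: mult_ac)
    also have "\<dots> = - a * IW w ([:1,-1:] * \<psi>) * poly \<psi> (-1)" by (simp only: e)
    also have "\<dots> = - a * (poly \<psi> (-1) * IW w ([:1,-1:] * \<psi>))" by (simp only: mult_ac)
    also have "\<dots> = - a * IW w ([:1,-1:] * \<psi> * \<psi>)" by (simp only: psi_id_m1)
    finally have "cRp a (-1) * (poly (Pa w n a) (-1) * poly \<psi> (-1)) = - a * IW w ([:1,-1:] * \<psi> * \<psi>)" .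
    moreover have "- a * IW w ([:1,-1:] * \<psi> * \<psi>) < 0" using a K1 by (simp add: mult_pos_pos)
    moreover have "poly (Pa w n a) (-1) * poly \<psi> (-1) < 0"
    proof -
      have "poly (Pa w n a) (-1) * poly \<psi> (-1) = poly \<phi> (-1) * poly \<psi> (-1) - 2 * a * (poly \<psi> (-1))^2"
        using a by (simp add: poly_Pa_pos algebra_simps power2_eq_square)
      moreover have "2 * a * (poly \<psi> (-1))^2 \<ge> 0" using a by simp
      ultimately show ?thesis using phi_psi_m1 by linarith
    qed
    ultimately have "cRp a (-1) > 0" by (rule pos_from_neg)
    then show ?thesis using True by simp
  qed
qed

definition SRm where "SRm a = insert 1 (ZP a)"
definition cRm where "cRm a s = IW w (lag (SRm a) s)"

lemma SRm: "finite (SRm a)" "card (SRm a) = n + 1" "SRm a \<subseteq> {-1<..1}"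
proof -
  have "1 \<notin> ZP a" using ZP(3)[of a] by auto
  then show "finite (SRm a)" "card (SRm a) = n + 1" using ZP(1,2) by (auto simp: SRm_def)
  have "ZP a \<subseteq> {-1<..1}" using ZP(3)[of a] by auto
  then show "SRm a \<subseteq> {-1<..1}" by (simp add: SRm_def)
qed

lemma Rm_exact:
  assumes a: "a < 0"
  shows "exact_on w n (SRm a) (cRm a)"
  unfolding cRm_def[abs_def]
proof (rule quad_exact[OF wf SRm(1) SRm(2), where D = "[:1,-1:] * Pa w n a"])
  show "1 \<le> n + 1" by simp
  show "degree ([:1,-1:] * Pa w n a) = n + 1"
    using degree_mult_eq[OF _ Pa_nz, of "[:1,-1:]" a] Pa_deg_lc[of a] by simp
  show "\<And>s. s \<in> SRm a \<Longrightarrow> poly ([:1,-1:] * Pa w n a) s = 0"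
    by (auto simp: SRm_def ZP_def)
  fix q :: "real poly" assume "q \<noteq> 0" "n + 1 + degree q \<le> 2 * n - 1"
  then have "degree q < n - 1" by linarith
  then show "IW w ([:1,-1:] * Pa w n a * q) = 0" by (rule Pa_quasi_neg[OF a])
qed

lemma Rm_pos:
  assumes a: "a < 0"
  shows "pos_quadrature w n (SRm a) (cRm a)"
proof (rule pos_quadratureI[OF SRm(1) _ Rm_exact[OF a]], intro ballI)
  note ex = Rm_exact[OF a]
  fix s assume s: "s \<in> SRm a"
  show "cRm a s > 0"
  proof (cases "s = 1")
    case False
    then have sZ: "s \<in> ZP a" using s by (simp add: SRm_def)
    have sr: "-1 < s" "s < 1" using sZ ZP(3)[of a] by auto
    show ?thesis
    proof (rule weight_pos[OF wf ex SRm(1) s, of "[:1,-1:] * (lag (ZP a) s)^2"])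
      have "degree ([:1,-1:] * (lag (ZP a) s)^2) \<le> 1 + degree ((lag (ZP a) s)^2)"
        using degree_mult_le[of "[:1,-1:]" "(lag (ZP a) s)^2"] by simp
      then show "degree ([:1,-1:] * (lag (ZP a) s)^2) \<le> 2 * n - 1"
        using degree_lag_sq[OF ZP(1) sZ] ZP(2) n1 by simp
      show "\<And>u. u \<in> SRm a \<Longrightarrow> u \<noteq> s \<Longrightarrow> poly ([:1,-1:] * (lag (ZP a) s)^2) u = 0"
        using ZP(1) by (auto simp: SRm_def lag_other)
      show "poly ([:1,-1:] * (lag (ZP a) s)^2) s > 0" using ZP(1) sr by (simp add: lag_self)
      show "\<And>t. t \<in> {-1<..<1} \<Longrightarrow> poly ([:1,-1:] * (lag (ZP a) s)^2) t \<ge> 0"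
        by (rule nn_times_sq) simp
    qed
  next
    case True
    have m1: "1 \<in> SRm a" by (simp add: SRm_def)
    have "cRm a 1 * poly (Pa w n a) 1 = IW w (Pa w n a)"
    proof (rule exact_weight[OF ex SRm(1) m1])
      show "degree (Pa w n a) \<le> 2 * n - 1" using Pa_deg_lc[of a] n1 by simp
    qed (auto simp: SRm_def ZP_def)
    also have "\<dots> = - a * IW w ([:1,1:] * \<psi>)" using a by (simp add: IW_Pa_neg)
    finally have e: "cRm a 1 * poly (Pa w n a) 1 = - a * IW w ([:1,1:] * \<psi>)" .
    have "cRm a 1 * (poly (Pa w n a) 1 * poly \<psi> 1) = (cRm a 1 * poly (Pa w n a) 1) * poly \<psi> 1"
      by (simp only: mult_ac)
    also have "\<dots> = - a * IW w ([:1,1:] * \<psi>) * poly \<psi> 1" by (simp only: e)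
    also have "\<dots> = - a * (poly \<psi> 1 * IW w ([:1,1:] * \<psi>))" by (simp only: mult_ac)
    also have "\<dots> = - a * IW w ([:1,1:] * \<psi> * \<psi>)" by (simp only: psi_id_1)
    finally have "cRm a 1 * (poly (Pa w n a) 1 * poly \<psi> 1) = - a * IW w ([:1,1:] * \<psi> * \<psi>)" .
    moreover have "- a * IW w ([:1,1:] * \<psi> * \<psi>) > 0" using a K2 by (simp add: mult_neg_pos)
    moreover have "poly (Pa w n a) 1 * poly \<psi> 1 > 0" using Pa_1[of a] psi_1 by simp
    ultimately have "cRm a 1 > 0" by (rule pos_from_pos)
    then show ?thesis using True by simp
  qed
qed

definition SL where "SL = {t. poly ([:1,0,-1:] * \<psi>) t = 0}"
definition cL where "cL s = IW w (lag SL s)"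

lemma SL_eq: "SL = insert (-1) (insert 1 Zpsi)"
proof -
  have "poly ([:1,0,-1:] * \<psi>) t = 0 \<longleftrightarrow> t = -1 \<or> t = 1 \<or> poly \<psi> t = 0" for t
  proof -
    have "poly ([:1,0,-1:] * \<psi>) t = (1 - t) * (1 + t) * poly \<psi> t"
      by (simp only: poly_mult poly_m1p1) (simp add: power2_eq_square algebra_simps)
    then show ?thesis by auto
  qed
  then show ?thesis unfolding SL_def Zpsi_def by auto
qed

lemma SL: "finite SL" "card SL = n + 1" "SL \<subseteq> {-1..1}"
proof -
  have "-1 \<notin> Zpsi" "1 \<notin> Zpsi" using Zpsi(3) by auto
  then show "finite SL" "card SL = n + 1" using Zpsi(1,2) n1 by (auto simp: SL_eq)
  show "SL \<subseteq> {-1..1}" using Zpsi(3) by (auto simp: SL_eq)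
qed

lemma L_exact: "exact_on w n SL cL"
  unfolding cL_def[abs_def]
proof (rule quad_exact[OF wf SL(1) SL(2), where D = "[:1,0,-1:] * \<psi>"])
  show "1 \<le> n + 1" by simp
  show "degree ([:1,0,-1:] * \<psi>) = n + 1"
    using degree_mult_eq[OF _ psi_nz, of "[:1,0,-1:]"] psi_deg n1 by simp
  show "\<And>s. s \<in> SL \<Longrightarrow> poly ([:1,0,-1:] * \<psi>) s = 0" by (simp add: SL_def)
  fix q :: "real poly" assume "q \<noteq> 0" "n + 1 + degree q \<le> 2 * n - 1"
  then have "degree q < n - 1" by linarith
  then show "IW w ([:1,0,-1:] * \<psi> * q) = 0" by (rule psi_orth)
qed

lemma L_pos: "pos_quadrature w n SL cL"
proof (rule pos_quadratureI[OF SL(1) _ L_exact], intro ballI)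
  note ex = L_exact
  fix s assume s: "s \<in> SL"
  have dpsi2: "degree (\<psi>^2) = 2 * (n - 1)" using psi_deg psi_nz by (simp add: degree_power_eq)
  consider "s = -1" | "s = 1" | "s \<in> Zpsi" using s SL_eq by auto
  then show "cL s > 0"
  proof cases
    case 1
    show ?thesis
    proof (rule weight_pos[OF wf ex SL(1) s, of "[:1,-1:] * \<psi>^2"])
      have "degree ([:1,-1:] * \<psi>^2) \<le> 1 + degree (\<psi>^2)"
        using degree_mult_le[of "[:1,-1:]" "\<psi>^2"] by simp
      then show "degree ([:1,-1:] * \<psi>^2) \<le> 2 * n - 1" using dpsi2 n1 by simp
      show "\<And>u. u \<in> SL \<Longrightarrow> u \<noteq> s \<Longrightarrow> poly ([:1,-1:] * \<psi>^2) u = 0"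
        using 1 by (auto simp: SL_eq Zpsi_def)
      show "poly ([:1,-1:] * \<psi>^2) s > 0" using 1 psi_nz_m1 by simp
      show "\<And>t. t \<in> {-1<..<1} \<Longrightarrow> poly ([:1,-1:] * \<psi>^2) t \<ge> 0"
        by (rule nn_times_sq) simp
    qed
  next
    case 2
    show ?thesis
    proof (rule weight_pos[OF wf ex SL(1) s, of "[:1,1:] * \<psi>^2"])
      have "degree ([:1,1:] * \<psi>^2) \<le> 1 + degree (\<psi>^2)"
        using degree_mult_le[of "[:1,1:]" "\<psi>^2"] by simp
      then show "degree ([:1,1:] * \<psi>^2) \<le> 2 * n - 1" using dpsi2 n1 by simp
      show "\<And>u. u \<in> SL \<Longrightarrow> u \<noteq> s \<Longrightarrow> poly ([:1,1:] * \<psi>^2) u = 0"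
        using 2 by (auto simp: SL_eq Zpsi_def)
      show "poly ([:1,1:] * \<psi>^2) s > 0" using 2 psi_nz_1 by simp
      show "\<And>t. t \<in> {-1<..<1} \<Longrightarrow> poly ([:1,1:] * \<psi>^2) t \<ge> 0"
        by (rule nn_times_sq) simp
    qed
  next
    case 3
    have sr: "-1 < s" "s < 1" using 3 Zpsi(3) by auto
    have cZ: "card Zpsi \<ge> 1" using 3 Zpsi(1) by (metis One_nat_def Suc_leI card_gt_0_iff empty_iff)
    show ?thesis
    proof (rule weight_pos[OF wf ex SL(1) s, of "[:1,0,-1:] * (lag Zpsi s)^2"])
      have "degree ([:1,0,-1:] * (lag Zpsi s)^2) \<le> 2 + degree ((lag Zpsi s)^2)"
        using degree_mult_le[of "[:1,0,-1:]" "(lag Zpsi s)^2"] by simp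
      then show "degree ([:1,0,-1:] * (lag Zpsi s)^2) \<le> 2 * n - 1"
        using degree_lag_sq[OF Zpsi(1) 3] Zpsi(2) cZ by simp
      show "\<And>u. u \<in> SL \<Longrightarrow> u \<noteq> s \<Longrightarrow> poly ([:1,0,-1:] * (lag Zpsi s)^2) u = 0"
        using Zpsi(1) by (auto simp: SL_eq lag_other)
      have "poly ([:1,0,-1:] * (lag Zpsi s)^2) s = 1 - s^2"
        using Zpsi(1) by (simp only: poly_mult poly_m1p1 poly_power lag_self) simp
      moreover have "s^2 < 1" using sr by (simp add: abs_square_less_1)
      ultimately show "poly ([:1,0,-1:] * (lag Zpsi s)^2) s > 0" by simp
      show "\<And>t. t \<in> {-1<..<1} \<Longrightarrow> poly ([:1,0,-1:] * (lag Zpsi s)^2) t \<ge> 0"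
        by (rule nn_times_sq) (auto simp: poly_m1p1 power2_eq_square intro: sq_le1)
    qed
  qed
qed

end


context ctx
begin

lemma no_common_zero:
  assumes px: "poly \<phi> x = 0" and qx: "poly \<psi> x = 0"
  shows False
proof -
  have xZ: "x \<in> Zphi" using px by (simp add: Zphi_def)
  have "x \<in> Zpsi" using qx by (simp add: Zpsi_def)
  then have cz: "card Zpsi \<ge> 1" using Zpsi(1) by (metis One_nat_def Suc_leI card_gt_0_iff empty_iff)
  then have n2: "n \<ge> 2" using Zpsi(2) by simp
  have "Zphi \<subseteq> Zpsi"
  proof
    fix y assume yZ: "y \<in> Zphi"
    show "y \<in> Zpsi"
    proof (cases "y = x")
      case True then show ?thesis using qx by (simp add: Zpsi_def)
    next
      case False
      define R where "R = Zphi - {x, y}"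
      have fR: "finite R" using Zphi(1) by (simp add: R_def)
      have cR: "card R = n - 2" using Zphi(1,2) xZ yZ False unfolding R_def
        by (simp add: card_Diff_subset)
      define h where "h = linprod R"
      have dh: "degree h = n - 2" using degree_linprod[OF fR] cR by (simp add: h_def)
      define p where "p = [:1,0,-1:] * \<psi> * h"
      have "IW w p = 0" unfolding p_def by (rule psi_orth) (use dh n2 in simp)
      have dp: "degree p \<le> 2 * n - 1"
      proof -
        have "degree p \<le> degree ([:1,0,-1:] * \<psi>) + degree h" unfolding p_def by (rule degree_mult_le)
        also have "\<dots> \<le> (2 + degree \<psi>) + degree h"
          using degree_mult_le[of "[:1,0,-1:]" \<psi>] by simp
        finally show ?thesis using psi_deg dh n2 by simp
      qed
      have "cG y * poly p y = IW w p"
      proof (rule exact_weight[OF gauss_exact Zphi(1) yZ dp])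
        fix u assume u: "u \<in> Zphi" "u \<noteq> y"
        show "poly p u = 0"
        proof (cases "u = x")
          case True then show ?thesis using qx by (simp only: p_def poly_mult mult_zero_left mult_zero_right)
        next
          case False
          then have "u \<in> R" using u by (simp add: R_def)
          then have "poly h u = 0" unfolding h_def poly_linprod using fR
            by (simp add: prod_zero_iff)
          then show ?thesis by (simp only: p_def poly_mult mult_zero_left mult_zero_right)
        qed
      qed
      then have "cG y * poly p y = 0" using \<open>IW w p = 0\<close> by simp
      moreover have "cG y > 0" using gauss_pos yZ pos_quadratureD by blast
      ultimately have p0: "poly p y = 0" by simp
      have yr: "-1 < y" "y < 1" using yZ Zphi(3) by auto
      have "poly h y \<noteq> 0" unfolding h_def poly_linprod using fR by (auto simp: prod_zero_iff R_def)
      moreover have "poly [:1,0,-1:] y \<noteq> 0"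
      proof -
        have "y^2 < 1" using yr by (simp add: abs_square_less_1)
        then show ?thesis by (simp only: poly_m1p1)
      qed
      ultimately have "poly \<psi> y = 0" using p0 unfolding p_def by (simp only: poly_mult mult_eq_0_iff) simp
      then show ?thesis by (simp add: Zpsi_def)
    qed
  qed
  then have "card Zphi \<le> card Zpsi" using Zpsi(1) by (rule card_mono[rotated])
  then show False using Zphi(2) Zpsi(2) n1 by simp
qed

definition a0 where "a0 x = poly \<phi> x / ((1 - x) * poly \<psi> x)"
definition b0 where "b0 x = poly \<phi> x / ((1 + x) * poly \<psi> x)"

definition Sx where "Sx x = (if poly \<phi> x = 0 then Zphi else if poly \<psi> x = 0 then SL
   else if poly \<phi> x / poly \<psi> x > 0 then SRp (a0 x) else SRm (b0 x))"
definition cx where "cx x = (if poly \<phi> x = 0 then cG else if poly \<psi> x = 0 then cL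
   else if poly \<phi> x / poly \<psi> x > 0 then cRp (a0 x) else cRm (b0 x))"

lemma Zphi_Pa0: "Zphi = {t. poly (Pa w n 0) t = 0}"
  by (simp add: Zphi_def Pa_pos)

lemma canon:
  assumes x: "-1 < x" "x < 1"
  shows "Sx x \<in> node_sets w n" "x \<in> Sx x" "pos_quadrature w n (Sx x) (cx x)"
    "finite (Sx x)" "card (Sx x) \<le> 2 * n" "Sx x \<subseteq> {-1..1}"
proof -
  consider (A) "poly \<phi> x = 0" | (B) "poly \<phi> x \<noteq> 0" "poly \<psi> x = 0"
    | (C) "poly \<phi> x \<noteq> 0" "poly \<psi> x \<noteq> 0" "poly \<phi> x / poly \<psi> x > 0"
    | (D) "poly \<phi> x \<noteq> 0" "poly \<psi> x \<noteq> 0" "\<not> poly \<phi> x / poly \<psi> x > 0" by blast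
  then have "Sx x \<in> node_sets w n \<and> x \<in> Sx x \<and> pos_quadrature w n (Sx x) (cx x) \<and>
    finite (Sx x) \<and> card (Sx x) \<le> 2 * n \<and> Sx x \<subseteq> {-1..1}"
  proof cases
    case A
    then show ?thesis using gauss_pos Zphi n1 Zphi_Pa0
      by (auto simp: Sx_def cx_def node_sets_def Zphi_def)
  next
    case B
    have e: "Sx x = SL" "cx x = cL" using B by (auto simp: Sx_def cx_def)
    have "SL \<in> node_sets w n" unfolding node_sets_def SL_def by blast
    moreover have "x \<in> SL" using B by (simp add: SL_def)
    moreover have "card SL \<le> 2 * n" using SL(2) n1 by simp
    ultimately show ?thesis using L_pos SL(1,3) e by simp
  next
    case C
    have a: "a0 x > 0" unfolding a0_def using C x
      by (metis diff_gt_0_iff_gt divide_divide_eq_left divide_pos_pos mult.commute)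
    have "poly (Pa w n (a0 x)) x = 0"
      using a x C by (simp add: poly_Pa_pos a0_def)
    then have xin: "x \<in> SRp (a0 x)" by (simp add: SRp_def ZP_def)
    have ns: "SRp (a0 x) \<in> node_sets w n" using a unfolding node_sets_def SRp_def ZP_def by blast
    show ?thesis using C xin ns Rp_pos[OF a] SRp[of "a0 x"] n1
      by (auto simp: Sx_def cx_def)
  next
    case D
    then have neg: "poly \<phi> x / poly \<psi> x < 0" by (simp add: not_less less_le)
    have b: "b0 x < 0" unfolding b0_def using neg x
      by (metis add.commute add_pos_pos divide_divide_eq_left divide_neg_pos less_add_same_cancel1 mult.commute diff_gt_0_iff_gt diff_minus_eq_add)
    have "poly (Pa w n (b0 x)) x = 0"
      using b x D by (simp add: poly_Pa_neg b0_def)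
    then have xin: "x \<in> SRm (b0 x)" by (simp add: SRm_def ZP_def)
    have ns: "SRm (b0 x) \<in> node_sets w n" using b unfolding node_sets_def SRm_def ZP_def by blast
    show ?thesis using D xin ns Rm_pos[OF b] SRm[of "b0 x"] n1
      by (auto simp: Sx_def cx_def)
  qed
  then show "Sx x \<in> node_sets w n" "x \<in> Sx x" "pos_quadrature w n (Sx x) (cx x)"
    "finite (Sx x)" "card (Sx x) \<le> 2 * n" "Sx x \<subseteq> {-1..1}" by auto
qed

lemma set_unique:
  assumes x: "-1 < x" "x < 1" and S: "S \<in> node_sets w n" and xS: "x \<in> S"
  shows "S = Sx x"
proof -
  from S consider (A) "S = {t. poly (Pa w n 0) t = 0}" | (B) "S = SL"
    | (C) a where "a > 0" "S = SRp a" | (D) a where "a < 0" "S = SRm a"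
    unfolding node_sets_def SL_def SRp_def SRm_def ZP_def by blast
  then show ?thesis
  proof cases
    case A
    then have "poly \<phi> x = 0" using xS by (simp add: Pa_pos)
    then show ?thesis using A by (simp add: Sx_def Zphi_Pa0)
  next
    case B
    then have "poly \<psi> x = 0" using xS x by (auto simp: SL_eq Zpsi_def)
    moreover have "poly \<phi> x \<noteq> 0" using no_common_zero calculation by blast
    ultimately show ?thesis using B by (simp add: Sx_def)
  next
    case (C a)
    then have "poly (Pa w n a) x = 0" using xS x by (auto simp: SRp_def ZP_def)
    then have e: "poly \<phi> x = a * (1 - x) * poly \<psi> x" using C by (simp add: poly_Pa_pos)
    have q: "poly \<psi> x \<noteq> 0"
    proof
      assume "poly \<psi> x = 0"
      then show False using no_common_zero e by simp
    qed
    have p: "poly \<phi> x \<noteq> 0" using e q C x by simp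
    have r: "poly \<phi> x / poly \<psi> x = a * (1 - x)" using e q by simp
    then have "poly \<phi> x / poly \<psi> x > 0" using C x by simp
    moreover have "a0 x = a" unfolding a0_def using e q x by simp
    ultimately show ?thesis using C p q by (simp add: Sx_def)
  next
    case (D a)
    then have "poly (Pa w n a) x = 0" using xS x by (auto simp: SRm_def ZP_def)
    then have e: "poly \<phi> x = a * (1 + x) * poly \<psi> x" using D by (simp add: poly_Pa_neg)
    have q: "poly \<psi> x \<noteq> 0"
    proof
      assume "poly \<psi> x = 0"
      then show False using no_common_zero e by simp
    qed
    have p: "poly \<phi> x \<noteq> 0" using e q D x by simp
    have r: "poly \<phi> x / poly \<psi> x = a * (1 + x)" using e q by simp
    moreover have "a * (1 + x) < 0" using D x by (intro mult_neg_pos) auto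
    ultimately have "\<not> poly \<phi> x / poly \<psi> x > 0" by simp
    moreover have "b0 x = a" unfolding b0_def using e q x by simp
    ultimately show ?thesis using D p q by (simp add: Sx_def)
  qed
qed

lemma weight_unique:
  assumes pq: "pos_quadrature w n S c" and fS: "finite S" and cS: "card S \<le> 2 * n" and xS: "x \<in> S"
  shows "c x = IW w (lag S x)"
proof -
  have ex: "exact_on w n S c" using pos_quadratureD[OF pq] by blast
  have "c x * poly (lag S x) x = IW w (lag S x)"
  proof (rule exact_weight[OF ex fS xS])
    show "degree (lag S x) \<le> 2 * n - 1" using degree_lag[OF fS xS] cS by simp
  qed (use fS in \<open>simp add: lag_other\<close>)
  then show ?thesis using lag_self[OF fS] by simp
qed

lemma lam_eq:
  assumes x: "-1 < x" "x < 1"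
  shows "lam w n x = cx x x"
  unfolding lam_def
proof (rule the_equality)
  show "\<exists>S c. S \<in> node_sets w n \<and> x \<in> S \<and> pos_quadrature w n S c \<and> c x = cx x x"
    using canon[OF x] by blast
  fix l assume "\<exists>S c. S \<in> node_sets w n \<and> x \<in> S \<and> pos_quadrature w n S c \<and> c x = l"
  then obtain S c where S: "S \<in> node_sets w n" "x \<in> S" "pos_quadrature w n S c" "c x = l" by blast
  have "S = Sx x" by (rule set_unique[OF x S(1,2)])
  then have "c x = IW w (lag (Sx x) x)"
    using weight_unique[OF S(3) _ _ S(2)] canon[OF x] by simp
  moreover have "cx x x = IW w (lag (Sx x) x)"
    using weight_unique[OF canon(3)[OF x] canon(4,5)[OF x] canon(2)[OF x]] .
  ultimately show "l = cx x x" using S(4) by simp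
qed

end


context ctx
begin

lemma lam_bound_G:
  assumes x: "-1 < x" "x < 1"
    and M: "AE t in lborel. t \<in> {-1..1} \<longrightarrow> w t \<le> M"
    and dG: "degree G \<le> 2 * n - 1" and Gnn: "\<And>t. t \<in> {-1..1} \<Longrightarrow> poly G t \<ge> 0"
  shows "lam w n x * poly G x \<le> M * integral {-1..1} (poly G)"
proof -
  note C = canon[OF x]
  define S where "S = Sx x"
  define c where "c = cx x"
  have fS: "finite S" and xS: "x \<in> S" and sub: "S \<subseteq> {-1..1}"
    using C by (auto simp: S_def)
  have pq: "pos_quadrature w n S c" using C by (simp add: S_def c_def)
  then have cpos: "\<And>s. s \<in> S \<Longrightarrow> c s > 0" and ex: "exact_on w n S c"
    using pos_quadratureD by blast+
  have "lam w n x * poly G x = c x * poly G x" using lam_eq[OF x] by (simp add: c_def)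
  also have "\<dots> \<le> (\<Sum>s\<in>S. c s * poly G s)"
  proof (rule member_le_sum[OF xS _ fS])
    fix s assume "s \<in> S - {x}"
    then have "c s > 0" "poly G s \<ge> 0" using cpos Gnn sub by auto
    then show "0 \<le> c s * poly G s" by simp
  qed
  also have "\<dots> = IW w G" using ex dG unfolding exact_on_def by simp
  also have "\<dots> \<le> (LINT t:{-1..1}|lborel. M * poly G t)"
    unfolding IW_def
  proof (rule set_integral_mono_AE)
    show "set_integrable lborel {-1..1} (\<lambda>t. w t * poly G t)" by (rule wf_int_poly[OF wf])
    have "set_integrable lborel {-1..1::real} (poly G)"
      by (rule borel_integrable_atLeastAtMost') (auto intro: continuous_intros)
    then show "set_integrable lborel {-1..1} (\<lambda>t. M * poly G t)" by simp
    show "AE t\<in>{-1..1} in lborel. w t * poly G t \<le> M * poly G t"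
      using M by eventually_elim (auto intro!: mult_right_mono Gnn)
  qed
  also have "\<dots> = M * (LINT t:{-1..1}|lborel. poly G t)" by simp
  also have "(LINT t:{-1..1}|lborel. poly G t) = integral {-1..1} (poly G)"
    by (rule set_borel_integral_eq_integral(2), rule borel_integrable_atLeastAtMost')
       (auto intro: continuous_intros)
  finally show ?thesis .
qed

lemma M_pos:
  assumes M: "AE t in lborel. t \<in> {-1..1} \<longrightarrow> w t \<le> M"
  shows "M > 0"
proof -
  have "0 < IW w 1" using IW_pos[OF wf, of 1] by simp
  also have "IW w 1 \<le> (LINT t:{-1..1::real}|lborel. M)"
    unfolding IW_def
  proof (rule set_integral_mono_AE[where g = "\<lambda>t. M"])
    show "set_integrable lborel {-1..1} (\<lambda>t. w t * poly 1 t)" by (rule wf_int_poly[OF wf])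
    show "set_integrable lborel {-1..1::real} (\<lambda>t. M)"
      by (rule borel_integrable_atLeastAtMost') (auto intro: continuous_intros)
    show "AE t\<in>{-1..1} in lborel. w t * poly 1 t \<le> M"
      using M by eventually_elim auto
  qed
  also have "(LINT t:{-1..1::real}|lborel. M) = 2 * M" by (simp add: set_integral_const)
  finally show ?thesis by simp
qed

end


lemma poly_m1p1_gen: "poly [:1,0,-1:] t = 1 - (t::real)^2"
  unfolding power2_eq_square by simp


fun chT :: "nat \<Rightarrow> real poly" where
  "chT 0 = 1"
| "chT (Suc 0) = [:0,1:]"
| "chT (Suc (Suc k)) = smult 2 ([:0,1:] * chT (Suc k)) - chT k"

fun chU :: "nat \<Rightarrow> real poly" where
  "chU 0 = 0"
| "chU (Suc 0) = 1"
| "chU (Suc (Suc k)) = smult 2 ([:0,1:] * chU (Suc k)) - chU k"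

lemma cos_rec: "cos (real (Suc (Suc k)) * t) = 2 * cos t * cos (real (Suc k) * t) - cos (real k * t)"
proof -
  have a: "real (Suc (Suc k)) * t = real (Suc k) * t + t" by (simp add: algebra_simps)
  have b: "real k * t = real (Suc k) * t - t" by (simp add: algebra_simps)
  show ?thesis unfolding a b cos_add cos_diff by simp
qed

lemma sin_rec: "sin (real (Suc (Suc k)) * t) = 2 * cos t * sin (real (Suc k) * t) - sin (real k * t)"
proof -
  have a: "real (Suc (Suc k)) * t = real (Suc k) * t + t" by (simp add: algebra_simps)
  have b: "real k * t = real (Suc k) * t - t" by (simp add: algebra_simps)
  show ?thesis unfolding a b sin_add sin_diff by simp
qed

lemma chT_cos: "poly (chT k) (cos t) = cos (real k * t)"
proof (induction k rule: chT.induct)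
  case (3 k)
  have "poly (chT (Suc (Suc k))) (cos t) = 2 * cos t * poly (chT (Suc k)) (cos t) - poly (chT k) (cos t)"
    by simp
  also have "\<dots> = cos (real (Suc (Suc k)) * t)" using 3 by (simp only: cos_rec)
  finally show ?case .
qed simp_all

lemma chU_sin: "poly (chU k) (cos t) * sin t = sin (real k * t)"
proof (induction k rule: chU.induct)
  case (3 k)
  have "poly (chU (Suc (Suc k))) (cos t) * sin t
      = 2 * cos t * (poly (chU (Suc k)) (cos t) * sin t) - poly (chU k) (cos t) * sin t"
    by (simp add: algebra_simps)
  also have "\<dots> = sin (real (Suc (Suc k)) * t)" using 3 by (simp only: sin_rec)
  finally show ?case .
qed simp_all

lemma deg_chT: "degree (chT k) \<le> k"
proof (induction k rule: chT.induct)
  case (3 k)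
  have "degree ([:0,1:] * chT (Suc k)) \<le> Suc (Suc k)"
    using degree_mult_le[of "[:0,1:]" "chT (Suc k)"] 3(1) by simp
  then have "degree (smult 2 ([:0,1:] * chT (Suc k))) \<le> Suc (Suc k)"
    using degree_smult_le le_trans by blast
  moreover have "degree (chT k) \<le> Suc (Suc k)" using 3(2) by simp
  ultimately show ?case by (simp add: degree_diff_le)
qed simp_all

lemma deg_chU: "degree (chU k) \<le> k - 1"
proof (induction k rule: chU.induct)
  case (3 k)
  have "degree ([:0,1:] * chU (Suc k)) \<le> Suc k"
    using degree_mult_le[of "[:0,1:]" "chU (Suc k)"] 3(1) by simp
  then have "degree (smult 2 ([:0,1:] * chU (Suc k))) \<le> Suc k"
    using degree_smult_le le_trans by blast
  moreover have "degree (chU k) \<le> Suc k" using 3(2) by simp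
  ultimately show ?case by (simp add: degree_diff_le)
qed simp_all

definition Dk :: "nat \<Rightarrow> real \<Rightarrow> real" where
  "Dk r p = 1 + 2 * (\<Sum>k=1..r. cos (real k * p))"

definition Pc :: "nat \<Rightarrow> real \<Rightarrow> real poly" where
  "Pc r a = 1 + smult 2 (\<Sum>k=1..r. smult (cos (real k * a)) (chT k))"

definition Rc :: "nat \<Rightarrow> real \<Rightarrow> real poly" where
  "Rc r a = smult 2 (\<Sum>k=1..r. smult (sin (real k * a)) (chU k))"

definition Gc :: "nat \<Rightarrow> real \<Rightarrow> real poly" where
  "Gc r a = smult 2 (Pc r a ^ 4) + smult 12 (Pc r a ^ 2 * [:1,0,-1:] * Rc r a ^ 2)
     + smult 2 ([:1,0,-1:] ^ 2 * Rc r a ^ 4)"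

lemma Pc_cos: "poly (Pc r a) (cos t) = 1 + 2 * (\<Sum>k=1..r. cos (real k * a) * cos (real k * t))"
  by (simp add: Pc_def poly_sum chT_cos)

lemma Rc_cos: "poly (Rc r a) (cos t) * sin t = 2 * (\<Sum>k=1..r. sin (real k * a) * sin (real k * t))"
  by (simp add: Rc_def poly_sum sum_distrib_right mult.assoc chU_sin)

lemma Dk_minus: "Dk r (t - a) = poly (Pc r a) (cos t) + poly (Rc r a) (cos t) * sin t"
  unfolding Pc_cos Rc_cos Dk_def
  by (simp add: right_diff_distrib cos_diff sum.distrib distrib_left algebra_simps)

lemma Dk_plus: "Dk r (t + a) = poly (Pc r a) (cos t) - poly (Rc r a) (cos t) * sin t"
  unfolding Pc_cos Rc_cos Dk_def
  by (simp add: distrib_left cos_add sum_subtractf algebra_simps)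

lemma Gc_cos: "poly (Gc r a) (cos t) = Dk r (t - a) ^ 4 + Dk r (t + a) ^ 4"
proof -
  define A where "A = poly (Pc r a) (cos t)"
  define B where "B = poly (Rc r a) (cos t)"
  have s2: "(sin t)^2 = 1 - (cos t)^2" by (simp add: sin_squared_eq)
  have "poly (Gc r a) (cos t) = 2 * A^4 + 12 * (A^2 * (1 - (cos t)^2) * B^2) + 2 * ((1 - (cos t)^2)^2 * B^4)"
    unfolding Gc_def A_def B_def by (simp only: poly_add poly_smult poly_mult poly_power poly_m1p1_gen)
  also have "\<dots> = (A + B * sin t)^4 + (A - B * sin t)^4"
    unfolding s2[symmetric] by (simp add: power2_eq_square power4_eq_xxxx algebra_simps)
  finally show ?thesis by (simp add: Dk_minus Dk_plus A_def B_def)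
qed

lemma Dk_Suc: "Dk (Suc r) p = Dk r p + 2 * cos (real (Suc r) * p)"
  unfolding Dk_def by (simp add: sum.cl_ivl_Suc algebra_simps)

lemma Dk_sin: "Dk r p * sin (p / 2) = sin ((2 * real r + 1) * p / 2)"
proof (induction r)
  case 0 then show ?case by (simp add: Dk_def)
next
  case (Suc r)
  have e: "2 * cos (real (Suc r) * p) * sin (p / 2)
      = sin ((2 * real (Suc r) + 1) * p / 2) - sin ((2 * real r + 1) * p / 2)"
  proof -
    have a: "(2 * real (Suc r) + 1) * p / 2 = real (Suc r) * p + p / 2" by (simp add: algebra_simps)
    have b: "(2 * real r + 1) * p / 2 = real (Suc r) * p - p / 2" by (simp add: algebra_simps)
    show ?thesis unfolding a b sin_add sin_diff by simp
  qed
  show ?case unfolding Dk_Suc using Suc e by (simp add: algebra_simps)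
qed

lemma Dk_abs: "\<bar>Dk r p\<bar> \<le> 2 * real r + 1"
proof -
  have "\<bar>\<Sum>k=1..r. cos (real k * p)\<bar> \<le> (\<Sum>k=1..r. \<bar>cos (real k * p)\<bar>)" by (rule sum_abs)
  also have "\<dots> \<le> (\<Sum>k=1..r. 1)" by (intro sum_mono) simp
  also have "\<dots> = real r" by simp
  finally have "\<bar>\<Sum>k=1..r. cos (real k * p)\<bar> \<le> real r" .
  then show ?thesis unfolding Dk_def by linarith
qed

lemma Dk_0: "Dk r 0 = 2 * real r + 1"
  unfolding Dk_def by simp

lemma deg_Pc: "degree (Pc r a) \<le> r"
proof -
  have "degree (\<Sum>k=1..r. smult (cos (real k * a)) (chT k)) \<le> r"
    by (intro degree_sum_le) (auto intro: order_trans[OF degree_smult_le] order_trans[OF deg_chT])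
  then show ?thesis unfolding Pc_def
    by (intro degree_add_le) (auto intro: order_trans[OF degree_smult_le])
qed

lemma deg_Rc: "degree (Rc r a) \<le> r - 1"
proof -
  have "degree (\<Sum>k=1..r. smult (sin (real k * a)) (chU k)) \<le> r - 1"
    by (intro degree_sum_le) (auto intro: order_trans[OF degree_smult_le] order_trans[OF deg_chU])
  then show ?thesis unfolding Rc_def by (auto intro: order_trans[OF degree_smult_le])
qed

lemma deg_Gc: "degree (Gc r a) \<le> 4 * r"
proof (cases "r = 0")
  case True
  then have "Pc r a = 1" "Rc r a = 0" by (simp_all add: Pc_def Rc_def)
  then show ?thesis unfolding Gc_def by simp
next
  case False
  have dP: "degree (Pc r a) \<le> r" by (rule deg_Pc)
  have dR: "degree (Rc r a) \<le> r - 1" by (rule deg_Rc)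
  have d1: "degree (Pc r a ^ 4) \<le> 4 * r"
    using degree_power_le[of "Pc r a" 4] dP by simp
  have d2: "degree (Pc r a ^ 2 * [:1,0,-1:] * Rc r a ^ 2) \<le> 4 * r"
  proof -
    have "degree (Pc r a ^ 2 * [:1,0,-1:] * Rc r a ^ 2)
        \<le> degree (Pc r a ^ 2 * [:1,0,-1:]) + degree (Rc r a ^ 2)" by (rule degree_mult_le)
    also have "\<dots> \<le> (degree (Pc r a ^ 2) + 2) + degree (Rc r a ^ 2)"
      using degree_mult_le[of "Pc r a ^ 2" "[:1,0,-1:]"] by simp
    also have "\<dots> \<le> (2 * r + 2) + 2 * (r - 1)"
      using degree_power_le[of "Pc r a" 2] degree_power_le[of "Rc r a" 2] dP dR by simp
    finally show ?thesis using False by simp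
  qed
  have d3: "degree ([:1,0,-1:] ^ 2 * Rc r a ^ 4) \<le> 4 * r"
  proof -
    have "degree ([:1,0,-1:] ^ 2 * Rc r a ^ 4) \<le> degree ([:1,0,-1:] ^ 2 :: real poly) + degree (Rc r a ^ 4)"
      by (rule degree_mult_le)
    also have "\<dots> \<le> 4 + 4 * (r - 1)"
      using degree_power_le[of "[:1,0,-1:] :: real poly" 2] degree_power_le[of "Rc r a" 4] dR by simp
    finally show ?thesis using False by simp
  qed
  show ?thesis unfolding Gc_def
    using d1 d2 d3 by (intro degree_add_le) (auto intro: order_trans[OF degree_smult_le])
qed

lemma Gc_nn:
  assumes "-1 \<le> t" "t \<le> 1"
  shows "poly (Gc r a) t \<ge> 0"
proof -
  define A where "A = poly (Pc r a) t"
  define B where "B = poly (Rc r a) t"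
  define H where "H = 1 - t^2"
  have "\<bar>t\<bar> \<le> 1" using assms by simp
  then have "\<bar>t\<bar> * \<bar>t\<bar> \<le> 1" by (intro mult_le_one) auto
  then have h: "H \<ge> 0" unfolding H_def power2_eq_square by (simp add: abs_mult[symmetric])
  have e: "poly (Gc r a) t = 2 * A^4 + 12 * (A^2 * H * B^2) + 2 * (H^2 * B^4)"
    unfolding Gc_def A_def B_def H_def by (simp only: poly_add poly_smult poly_mult poly_power poly_m1p1_gen)
  have "A^4 \<ge> 0" "B^4 \<ge> 0" "A^2 \<ge> 0" "B^2 \<ge> 0" "H^2 \<ge> 0" by (simp_all add: zero_le_even_power)
  then have "0 \<le> 2 * A^4 + 12 * (A^2 * H * B^2) + 2 * (H^2 * B^4)"
    using h by (intro add_nonneg_nonneg mult_nonneg_nonneg) auto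
  then show ?thesis using e by simp
qed

lemma Gc_at:
  "poly (Gc r a) (cos a) \<ge> (2 * real r + 1) ^ 4"
proof -
  have "poly (Gc r a) (cos a) = Dk r (a - a) ^ 4 + Dk r (a + a) ^ 4" by (rule Gc_cos)
  then have e: "poly (Gc r a) (cos a) = (2 * real r + 1) ^ 4 + Dk r (a + a) ^ 4"
    by (simp only: diff_self Dk_0)
  have "Dk r (a + a) ^ 4 \<ge> 0" by (simp add: zero_le_even_power)
  then show ?thesis using e by linarith
qed


lemma sin_lower:
  fixes y :: real
  assumes "0 \<le> y" "y \<le> pi / 2"
  shows "y / 4 \<le> sin y"
proof (cases "y \<le> pi / 3")
  case True
  have c: "cos y \<ge> 1 / 2" using cos_monotone_0_pi_le[of y "pi/3"] True assms cos_60 by simp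
  show ?thesis
  proof -
    have "y < pi / 2" using True pi_gt_zero by linarith
    then have yl: "\<bar>y\<bar> < pi / 2" using assms by simp
    have cp: "cos y > 0" using c by simp
    have "y \<le> \<bar>tan y\<bar>" using abs_tan_ge[OF yl] assms by simp
    also have "\<bar>tan y\<bar> = sin y / cos y"
      using cp sin_ge_zero[of y] assms by (simp add: tan_def)
    finally have "y * cos y \<le> sin y" using cp by (simp add: field_simps)
    moreover have "y * (1/2) \<le> y * cos y" using c assms by (intro mult_left_mono) auto
    moreover have "y / 4 \<le> y * (1/2)" using assms by simp
    ultimately show ?thesis by linarith
  qed
next
  case False
  have "sin (pi / 3) \<le> sin y" using sin_monotone_2pi_le[of "pi/3" y] False assms by simp
  moreover have "sin (pi / 3) \<ge> 1 / 2" unfolding sin_60 by simp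
  moreover have "y / 4 \<le> 1 / 2" using assms pi_less_4 by simp
  ultimately show ?thesis by linarith
qed

lemma abs_sin_half_lower:
  fixes u :: real
  assumes "\<bar>u\<bar> \<le> pi"
  shows "\<bar>u\<bar> / 8 \<le> \<bar>sin (u / 2)\<bar>"
proof -
  have "\<bar>u\<bar> / 2 / 4 \<le> sin (\<bar>u\<bar> / 2)" using sin_lower[of "\<bar>u\<bar> / 2"] assms by simp
  also have "sin (\<bar>u\<bar> / 2) = \<bar>sin (u / 2)\<bar>"
  proof (cases "u \<ge> 0")
    case True then show ?thesis using sin_ge_zero[of "u/2"] assms by simp
  next
    case False
    then have "sin (\<bar>u\<bar> / 2) = - sin (u / 2)" by simp
    moreover have "sin (\<bar>u\<bar> / 2) \<ge> 0" using sin_ge_zero[of "\<bar>u\<bar>/2"] assms by simp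
    ultimately show ?thesis by simp
  qed
  finally show ?thesis by simp
qed

lemma abs_sin_le_half: "\<bar>sin v\<bar> \<le> 2 * \<bar>sin (v / 2)\<bar>" for v :: real
proof -
  have "sin v = 2 * sin (v / 2) * cos (v / 2)"
    using sin_double[of "v/2"] by simp
  then have "\<bar>sin v\<bar> = 2 * \<bar>sin (v / 2)\<bar> * \<bar>cos (v / 2)\<bar>" by (simp add: abs_mult)
  also have "\<dots> \<le> 2 * \<bar>sin (v / 2)\<bar> * 1" by (intro mult_left_mono) auto
  finally show ?thesis by simp
qed

lemma sin_theta_bound:
  fixes t a :: real
  assumes "sin a \<ge> 0"
  shows "\<bar>sin t\<bar> \<le> sin a + 2 * \<bar>sin ((t - a) / 2)\<bar>" "\<bar>sin t\<bar> \<le> sin a + 2 * \<bar>sin ((t + a) / 2)\<bar>"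
proof -
  have "sin t = sin (t - a) * cos a + cos (t - a) * sin a"
    using sin_add[of "t - a" a] by simp
  then have "\<bar>sin t\<bar> \<le> \<bar>sin (t - a)\<bar> * \<bar>cos a\<bar> + \<bar>cos (t - a)\<bar> * sin a"
    using assms by (metis abs_mult abs_of_nonneg abs_triangle_ineq)
  also have "\<dots> \<le> \<bar>sin (t - a)\<bar> * 1 + 1 * sin a"
    using assms by (intro add_mono mult_mono) auto
  also have "\<dots> \<le> sin a + 2 * \<bar>sin ((t - a) / 2)\<bar>" using abs_sin_le_half[of "t - a"] by simp
  finally show "\<bar>sin t\<bar> \<le> sin a + 2 * \<bar>sin ((t - a) / 2)\<bar>" .
  have "sin t = sin (t + a) * cos a - cos (t + a) * sin a"
    using sin_diff[of "t + a" a] by simp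
  then have "\<bar>sin t\<bar> \<le> \<bar>sin (t + a)\<bar> * \<bar>cos a\<bar> + \<bar>cos (t + a)\<bar> * sin a"
    using assms by (metis abs_mult abs_of_nonneg abs_triangle_ineq4)
  also have "\<dots> \<le> \<bar>sin (t + a)\<bar> * 1 + 1 * sin a"
    using assms by (intro add_mono mult_mono) auto
  also have "\<dots> \<le> sin a + 2 * \<bar>sin ((t + a) / 2)\<bar>" using abs_sin_le_half[of "t + a"] by simp
  finally show "\<bar>sin t\<bar> \<le> sin a + 2 * \<bar>sin ((t + a) / 2)\<bar>" .
qed

lemma core_ineq:
  fixes Q s \<sigma> N :: real
  assumes Q0: "0 \<le> Q" and s0: "0 \<le> s" and QN: "Q \<le> N^2" and Qs: "Q * s^2 \<le> 1"
    and \<sigma>0: "0 \<le> \<sigma>" and N0: "0 < N"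
  shows "(\<sigma> + 2 * s) * Q^2 \<le> (2 * N^4 * \<sigma> + 4 * N^3) / (1 + N^2 * s^2)"
proof -
  have den: "1 + N^2 * s^2 > 0" by (simp add: add_pos_nonneg)
  have a: "Q^2 * (1 + N^2 * s^2) \<le> 2 * N^4"
  proof -
    have "Q^2 * (1 + N^2 * s^2) = Q^2 + N^2 * Q * (Q * s^2)" by (simp add: power2_eq_square algebra_simps)
    also have "\<dots> \<le> N^4 + N^2 * N^2 * 1"
    proof (rule add_mono)
      have "Q^2 \<le> (N^2)^2" using Q0 QN by (intro power_mono) auto
      then show "Q^2 \<le> N^4" by simp
      show "N^2 * Q * (Q * s^2) \<le> N^2 * N^2 * 1"
        using Q0 QN Qs s0 by (intro mult_mono) (auto intro: mult_nonneg_nonneg)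
    qed
    finally show ?thesis by (simp add: power2_eq_square power4_eq_xxxx)
  qed
  have sQ: "s * Q \<le> N"
  proof -
    have "(s * Q)^2 = Q * (Q * s^2)" by (simp add: power2_eq_square)
    also have "\<dots> \<le> N^2 * 1" using Q0 QN Qs by (intro mult_mono) auto
    finally have "(s * Q)^2 \<le> N^2" by simp
    then show ?thesis using N0 by (rule power2_le_imp_le[OF _ less_imp_le])
  qed
  have b: "s * Q^2 * (1 + N^2 * s^2) \<le> 2 * N^3"
  proof -
    have "s * Q^2 * (1 + N^2 * s^2) = (s * Q) * Q + N^2 * (Q * s^2) * (s * Q)"
      by (simp add: power2_eq_square algebra_simps)
    also have "\<dots> \<le> N * N^2 + N^2 * 1 * N"
      using sQ Q0 QN Qs s0 N0 by (intro add_mono mult_mono) (auto intro: mult_nonneg_nonneg)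
    finally show ?thesis by (simp add: power2_eq_square power3_eq_cube)
  qed
  have "(\<sigma> + 2 * s) * Q^2 * (1 + N^2 * s^2) = \<sigma> * (Q^2 * (1 + N^2 * s^2)) + 2 * (s * Q^2 * (1 + N^2 * s^2))"
    by (simp add: algebra_simps)
  also have "\<dots> \<le> \<sigma> * (2 * N^4) + 2 * (2 * N^3)"
    using a b \<sigma>0 by (intro add_mono mult_left_mono) auto
  finally have "(\<sigma> + 2 * s) * Q^2 * (1 + N^2 * s^2) \<le> 2 * N^4 * \<sigma> + 4 * N^3" by (simp add: mult_ac)
  then show ?thesis using den by (simp add: pos_le_divide_eq)
qed

definition kk :: "real \<Rightarrow> real \<Rightarrow> real" where
  "kk N u = 1 / (1 + (N * u / 8)^2)"

lemma kk_nn: "kk N u \<ge> 0" unfolding kk_def by (simp add: add_pos_nonneg)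

lemma Dk_point:
  fixes \<sigma> p :: real
  assumes \<sigma>0: "0 \<le> \<sigma>"
  shows "(\<sigma> + 2 * \<bar>sin (p / 2)\<bar>) * Dk r p ^ 4
     \<le> (2 * (2 * real r + 1)^4 * \<sigma> + 4 * (2 * real r + 1)^3) / (1 + (2 * real r + 1)^2 * (sin (p / 2))^2)"
proof -
  define N where "N = 2 * real r + 1"
  have "(\<sigma> + 2 * \<bar>sin (p / 2)\<bar>) * (Dk r p ^ 2)^2
     \<le> (2 * N^4 * \<sigma> + 4 * N^3) / (1 + N^2 * \<bar>sin (p / 2)\<bar>^2)"
  proof (rule core_ineq)
    show "Dk r p ^ 2 \<le> N^2" unfolding N_def using Dk_abs[of r p]
      by (metis abs_le_square_iff abs_of_nonneg le_add_same_cancel2 of_nat_0_le_iff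
          add_nonneg_nonneg mult_nonneg_nonneg zero_le_numeral zero_le_one)
    have "Dk r p ^ 2 * \<bar>sin (p / 2)\<bar>^2 = (sin ((2 * real r + 1) * p / 2))^2"
      using Dk_sin[of r p] by (simp add: power_mult_distrib[symmetric])
    also have "\<dots> \<le> 1" by (simp add: abs_square_le_1)
    finally show "Dk r p ^ 2 * \<bar>sin (p / 2)\<bar>^2 \<le> 1" .
    show "0 < N" unfolding N_def by (simp add: add_nonneg_pos)
  qed (use \<sigma>0 in auto)
  then show ?thesis by (simp add: N_def power_mult[symmetric])
qed

lemma inv_kk:
  fixes N s u :: real
  assumes "\<bar>u\<bar> / 8 \<le> s"
  shows "1 / (1 + N^2 * s^2) \<le> kk N u"
proof -
  have "(\<bar>u\<bar> / 8)^2 \<le> s^2" using assms by (intro power_mono) auto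
  then have "(u / 8)^2 \<le> s^2" by (simp add: power_divide)
  then have "N^2 * (u / 8)^2 \<le> N^2 * s^2" by (intro mult_left_mono) auto
  then have "1 + (N * u / 8)^2 \<le> 1 + N^2 * s^2" by (simp add: power_mult_distrib power_divide)
  moreover have "0 < 1 + (N * u / 8)^2" by (simp add: add_pos_nonneg)
  ultimately show ?thesis unfolding kk_def by (intro divide_left_mono) (auto intro: mult_pos_pos)
qed

lemma G_point:
  fixes a t :: real and r :: nat
  assumes a: "0 < a" "a < pi" and t: "0 \<le> t" "t \<le> pi"
  defines "N \<equiv> 2 * real r + 1"
  shows "sin t * poly (Gc r a) (cos t)
    \<le> (2 * N^4 * sin a + 4 * N^3) * (kk N (t - a) + kk N (t + a) + kk N (t + a - 2 * pi))"
proof -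
  define C where "C = 2 * N^4 * sin a + 4 * N^3"
  have sa: "sin a \<ge> 0" using a by (intro sin_ge_zero) auto
  have st: "sin t \<ge> 0" using t by (intro sin_ge_zero) auto
  have d4: "\<And>p. Dk r p ^ 4 \<ge> 0" by (simp add: zero_le_even_power)
  have m: "sin t * Dk r (t - a) ^ 4 \<le> C * kk N (t - a)"
  proof -
    have "sin t * Dk r (t - a) ^ 4 \<le> (sin a + 2 * \<bar>sin ((t - a) / 2)\<bar>) * Dk r (t - a) ^ 4"
      using sin_theta_bound(1)[OF sa, of t] st d4 by (intro mult_right_mono) auto
    also have "\<dots> \<le> C / (1 + N^2 * (sin ((t - a) / 2))^2)"
      unfolding C_def N_def by (rule Dk_point[OF sa])
    also have "\<dots> = C * (1 / (1 + N^2 * \<bar>sin ((t - a) / 2)\<bar>^2))" by simp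
    also have "\<dots> \<le> C * kk N (t - a)"
    proof (rule mult_left_mono)
      show "1 / (1 + N^2 * \<bar>sin ((t - a) / 2)\<bar>^2) \<le> kk N (t - a)"
        by (rule inv_kk, rule abs_sin_half_lower) (use a t in auto)
      show "0 \<le> C" unfolding C_def N_def using sa by simp
    qed
    finally show ?thesis .
  qed
  have p: "sin t * Dk r (t + a) ^ 4 \<le> C * (kk N (t + a) + kk N (t + a - 2 * pi))"
  proof -
    have "sin t * Dk r (t + a) ^ 4 \<le> (sin a + 2 * \<bar>sin ((t + a) / 2)\<bar>) * Dk r (t + a) ^ 4"
      using sin_theta_bound(2)[OF sa, of t] st d4 by (intro mult_right_mono) auto
    also have "\<dots> \<le> C / (1 + N^2 * (sin ((t + a) / 2))^2)"
      unfolding C_def N_def by (rule Dk_point[OF sa])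
    also have "\<dots> = C * (1 / (1 + N^2 * \<bar>sin ((t + a) / 2)\<bar>^2))" by simp
    also have "\<dots> \<le> C * (kk N (t + a) + kk N (t + a - 2 * pi))"
    proof (rule mult_left_mono)
      show "0 \<le> C" unfolding C_def N_def using sa by simp
      show "1 / (1 + N^2 * \<bar>sin ((t + a) / 2)\<bar>^2) \<le> kk N (t + a) + kk N (t + a - 2 * pi)"
      proof (cases "t + a \<le> pi")
        case True
        have "1 / (1 + N^2 * \<bar>sin ((t + a) / 2)\<bar>^2) \<le> kk N (t + a)"
          by (rule inv_kk, rule abs_sin_half_lower) (use a t True in auto)
        then show ?thesis using kk_nn[of N "t + a - 2 * pi"] by linarith
      next
        case False
        have e: "\<bar>sin ((t + a) / 2)\<bar> = \<bar>sin ((t + a - 2 * pi) / 2)\<bar>"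
        proof -
          have eq: "(t + a - 2 * pi) / 2 = (t + a) / 2 - pi" by (simp add: field_simps)
          have "sin ((t + a - 2 * pi) / 2) = - sin ((t + a) / 2)" by (simp only: eq sin_minus_pi)
          then show ?thesis by simp
        qed
        have "1 / (1 + N^2 * \<bar>sin ((t + a) / 2)\<bar>^2) \<le> kk N (t + a - 2 * pi)"
          unfolding e by (rule inv_kk, rule abs_sin_half_lower) (use a t False in auto)
        then show ?thesis using kk_nn[of N "t + a"] by linarith
      qed
    qed
    finally show ?thesis .
  qed
  have "sin t * poly (Gc r a) (cos t) = sin t * Dk r (t - a) ^ 4 + sin t * Dk r (t + a) ^ 4"
    by (simp add: Gc_cos distrib_left)
  also have "\<dots> \<le> C * kk N (t - a) + C * (kk N (t + a) + kk N (t + a - 2 * pi))"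
    using m p by (rule add_mono)
  finally show ?thesis by (simp add: C_def distrib_left)
qed

lemma kk_has_integral:
  fixes N c :: real
  assumes N: "N > 0"
  shows "((\<lambda>t. kk N (t + c)) has_integral ((8 / N) * arctan (N * (pi + c) / 8) - (8 / N) * arctan (N * (0 + c) / 8))) {0..pi}"
proof (rule fundamental_theorem_of_calculus)
  show "0 \<le> pi" by simp
  fix t assume "t \<in> {0..pi}"
  have "((\<lambda>t. (8 / N) * arctan (N * (t + c) / 8)) has_real_derivative
      (8 / N) * (inverse (1 + (N * (t + c) / 8)^2) * (N * 1 / 8))) (at t within {0..pi})"
    by (auto intro!: derivative_eq_intros DERIV_arctan[THEN DERIV_chain2])
  moreover have "(8 / N) * (inverse (1 + (N * (t + c) / 8)^2) * (N * 1 / 8)) = kk N (t + c)"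
    using N by (simp add: kk_def field_simps)
  ultimately show "((\<lambda>t. (8 / N) * arctan (N * (t + c) / 8)) has_vector_derivative kk N (t + c)) (at t within {0..pi})"
    by (simp add: has_real_derivative_iff_has_vector_derivative)
qed

lemma kk_integral_le:
  fixes N c :: real
  assumes N: "N > 0"
  shows "integral {0..pi} (\<lambda>t. kk N (t + c)) \<le> 8 * pi / N"
    "(\<lambda>t. kk N (t + c)) integrable_on {0..pi}"
proof -
  note h = kk_has_integral[OF N, of c]
  have "integral {0..pi} (\<lambda>t. kk N (t + c)) = (8 / N) * (arctan (N * (pi + c) / 8) - arctan (N * (0 + c) / 8))"
    using h by (simp add: integral_unique right_diff_distrib)
  also have "\<dots> \<le> (8 / N) * pi"
  proof (rule mult_left_mono)
    show "arctan (N * (pi + c) / 8) - arctan (N * (0 + c) / 8) \<le> pi"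
      using arctan_ubound[of "N * (pi + c) / 8"] arctan_lbound[of "N * (0 + c) / 8"] by linarith
  qed (use N in simp)
  finally show "integral {0..pi} (\<lambda>t. kk N (t + c)) \<le> 8 * pi / N" by simp
  show "(\<lambda>t. kk N (t + c)) integrable_on {0..pi}" using h by blast
qed

lemma subst_cos:
  fixes p :: "real poly"
  shows "integral {-1..1} (poly p) = integral {0..pi} (\<lambda>t. sin t * poly p (cos t))"
proof -
  have "((\<lambda>x. (- sin x) *\<^sub>R poly p (cos x)) has_integral
      (integral {cos 0..cos pi} (poly p) - integral {cos pi..cos 0} (poly p))) {0..pi}"
    by (rule has_integral_substitution_general[of "{}" 0 pi cos "-1" 1 "poly p" "\<lambda>x. - sin x"])
       (auto intro!: derivative_eq_intros continuous_intros)
  then have "((\<lambda>x. - (sin x * poly p (cos x))) has_integral (- integral {-1..1} (poly p))) {0..pi}"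
    by simp
  then have "((\<lambda>x. - (- (sin x * poly p (cos x)))) has_integral (- (- integral {-1..1} (poly p)))) {0..pi}"
    by (rule has_integral_neg)
  then have "((\<lambda>x. sin x * poly p (cos x)) has_integral (integral {-1..1} (poly p))) {0..pi}"
    by simp
  then show ?thesis by (simp add: integral_unique)
qed

lemma G_integral:
  fixes a :: real and r :: nat
  assumes a: "0 < a" "a < pi"
  defines "N \<equiv> 2 * real r + 1"
  shows "integral {-1..1} (poly (Gc r a)) \<le> (2 * N^4 * sin a + 4 * N^3) * (24 * pi / N)"
proof -
  define C where "C = 2 * N^4 * sin a + 4 * N^3"
  have N0: "N > 0" unfolding N_def by (simp add: add_nonneg_pos)
  have e1: "(\<lambda>t. kk N (t + (- a))) = (\<lambda>t. kk N (t - a))" by simp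
  have e3: "(\<lambda>t. kk N (t + (a - 2 * pi))) = (\<lambda>t. kk N (t + a - 2 * pi))" by (simp add: algebra_simps)
  note I1 = kk_integral_le[OF N0, of "- a", unfolded e1] and I2 = kk_integral_le[OF N0, of a]
    and I3 = kk_integral_le[OF N0, of "a - 2 * pi", unfolded e3]
  have int1: "(\<lambda>t. kk N (t - a)) integrable_on {0..pi}" using I1(2) .
  have int3: "(\<lambda>t. kk N (t + a - 2 * pi)) integrable_on {0..pi}" using I3(2) .
  have intS: "(\<lambda>t. kk N (t - a) + kk N (t + a) + kk N (t + a - 2 * pi)) integrable_on {0..pi}"
    using int1 I2(2) int3 by (intro integrable_add) auto
  have "integral {-1..1} (poly (Gc r a)) = integral {0..pi} (\<lambda>t. sin t * poly (Gc r a) (cos t))"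
    by (rule subst_cos)
  also have "\<dots> \<le> integral {0..pi} (\<lambda>t. C * (kk N (t - a) + kk N (t + a) + kk N (t + a - 2 * pi)))"
  proof (rule integral_le)
    show "(\<lambda>t. sin t * poly (Gc r a) (cos t)) integrable_on {0..pi}"
      by (rule integrable_continuous_interval) (auto intro!: continuous_intros)
    show "(\<lambda>t. C * (kk N (t - a) + kk N (t + a) + kk N (t + a - 2 * pi))) integrable_on {0..pi}"
      using integrable_on_cmult_left[OF intS, of C] by simp
    fix t assume "t \<in> {0..pi}"
    then show "sin t * poly (Gc r a) (cos t) \<le> C * (kk N (t - a) + kk N (t + a) + kk N (t + a - 2 * pi))"
      using G_point[OF a, of t r] unfolding C_def N_def by auto
  qed
  also have "\<dots> = C * integral {0..pi} (\<lambda>t. kk N (t - a) + kk N (t + a) + kk N (t + a - 2 * pi))"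
    by simp
  also have "\<dots> \<le> C * (24 * pi / N)"
  proof (rule mult_left_mono)
    have "integral {0..pi} (\<lambda>t. kk N (t - a) + kk N (t + a) + kk N (t + a - 2 * pi))
      = integral {0..pi} (\<lambda>t. kk N (t - a)) + integral {0..pi} (\<lambda>t. kk N (t + a))
        + integral {0..pi} (\<lambda>t. kk N (t + a - 2 * pi))"
      using int1 I2(2) int3 by (simp add: integral_add integrable_add)
    also have "\<dots> \<le> 8 * pi / N + 8 * pi / N + 8 * pi / N"
      using I1(1) I2(1) I3(1) by (intro add_mono)
    finally show "integral {0..pi} (\<lambda>t. kk N (t - a) + kk N (t + a) + kk N (t + a - 2 * pi)) \<le> 24 * pi / N"
      by simp
    have "sin a \<ge> 0" using a by (intro sin_ge_zero) auto
    then show "0 \<le> C" unfolding C_def using N0 by simp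
  qed
  finally   show ?thesis unfolding C_def by simp
qed


lemma final_arith:
  fixes lam M s N Gx I :: real and n :: nat
  assumes M: "M > 0" and N: "N > 0" and nN: "real n \<le> 2 * N" and n1: "n \<ge> 1"
    and s: "s \<ge> 0" and Gx: "Gx \<ge> N^4"
    and lamG: "lam * Gx \<le> M * I" and I: "I \<le> (2 * N^4 * s + 4 * N^3) * (24 * pi / N)"
  shows "lam \<le> 1920 * M / real n * max s (1 / real n)"
proof -
  have N4: "N^4 > 0" using N by simp
  have Gx0: "Gx > 0" using Gx N4 by linarith
  have B: "(2 * N^4 * s + 4 * N^3) * (24 * pi / N) = N^4 * (24 * pi * (2 * s / N + 4 / N^2))"
    using N by (simp add: field_simps power2_eq_square power3_eq_cube power4_eq_xxxx)
  define T where "T = 24 * pi * (2 * s / N + 4 / N^2)"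
  have T0: "T \<ge> 0" unfolding T_def using N s by simp
  have "I \<le> N^4 * T" using I B unfolding T_def by simp
  then have "M * I \<le> M * (N^4 * T)" using M by (intro mult_left_mono) auto
  then have "lam * Gx \<le> M * (N^4 * T)" using lamG by linarith
  also have "\<dots> \<le> M * (Gx * T)" using M T0 Gx by (intro mult_left_mono mult_right_mono) auto
  finally have "lam * Gx \<le> Gx * (M * T)" by (simp add: mult_ac)
  then have lamT: "lam \<le> M * T" using Gx0 by (simp add: mult.commute[of lam] mult_le_cancel_left_pos)
  have n0: "real n > 0" using n1 by simp
  have iN: "1 / N \<le> 2 / real n" using N n0 nN by (simp add: field_simps)
  have iN2: "1 / N^2 \<le> 4 / (real n)^2"
  proof -
    have "(1 / N)^2 \<le> (2 / real n)^2" using iN N by (intro power_mono) auto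
    then show ?thesis by (simp add: power_divide)
  qed
  define m where "m = max s (1 / real n)"
  have ms: "s \<le> m" and mn: "1 / real n \<le> m" unfolding m_def by auto
  have "2 * s / N + 4 / N^2 = 2 * s * (1 / N) + 4 * (1 / N^2)" by simp
  also have "\<dots> \<le> 2 * s * (2 / real n) + 4 * (4 / (real n)^2)"
    using iN iN2 s by (intro add_mono mult_left_mono) auto
  also have "\<dots> = (1 / real n) * (4 * s + 16 * (1 / real n))" using n0 by (simp add: power2_eq_square field_simps)
  also have "\<dots> \<le> (1 / real n) * (4 * m + 16 * m)"
    using ms mn n0 by (intro mult_left_mono add_mono) auto
  finally have "2 * s / N + 4 / N^2 \<le> 20 * m / real n" by simp
  then have "T \<le> 24 * pi * (20 * m / real n)" unfolding T_def by (intro mult_left_mono) auto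
  also have "\<dots> \<le> 24 * 4 * (20 * m / real n)"
  proof (rule mult_right_mono)
    show "24 * pi \<le> 24 * 4" using pi_less_4 by simp
    have "0 \<le> 1 / real n" by simp
    then have "0 \<le> m" using mn by linarith
    then show "0 \<le> 20 * m / real n" by simp
  qed
  finally have "T \<le> 1920 * m / real n" by simp
  then have "M * T \<le> M * (1920 * m / real n)" using M by (intro mult_left_mono) auto
  moreover have "M * (1920 * m / real n) = 1920 * M / real n * max s (1 / real n)"
    by (simp add: m_def)
  ultimately show ?thesis using lamT by linarith
qed

theorem lemma3p8:
  shows "\<exists>C>0. \<forall>(w::real \<Rightarrow> real) (M::real) (n::nat) (x::real).
    weight_fun w \<and> (AE t in lborel. t \<in> {-1..1} \<longrightarrow> w t \<le> M) \<and> n \<ge> 1 \<and> -1 < x \<and> x < 1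
    \<longrightarrow> lam w n x \<le> C * M / real n * max (sqrt (1 - x^2)) (1 / real n)"
proof (intro exI[of _ 1920] conjI allI impI)
  fix w :: "real \<Rightarrow> real" and M :: real and n :: nat and x :: real
  assume H: "weight_fun w \<and> (AE t in lborel. t \<in> {-1..1} \<longrightarrow> w t \<le> M) \<and> n \<ge> 1 \<and> -1 < x \<and> x < 1"
  then have wf: "weight_fun w" and AEM: "AE t in lborel. t \<in> {-1..1} \<longrightarrow> w t \<le> M"
    and n1: "n \<ge> 1" and x: "-1 < x" "x < 1" by auto
  interpret ctx w n using wf n1 by unfold_locales
  define r where "r = (n - 1) div 2"
  define N where "N = 2 * real r + 1"
  define a where "a = arccos x"
  have a: "0 < a" "a < pi" using arccos_lt_bounded[of x] x by (auto simp: a_def)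
  have ca: "cos a = x" using x by (simp add: a_def)
  have sa: "sin a = sqrt (1 - x^2)" using x by (simp add: a_def sin_arccos)
  define G where "G = Gc r a"
  have dG: "degree G \<le> 2 * n - 1"
  proof -
    have "4 * r \<le> 2 * n - 1" unfolding r_def using n1 by linarith
    then show ?thesis using deg_Gc[of r a] by (simp add: G_def)
  qed
  have Gnn: "\<And>t. t \<in> {-1..1} \<Longrightarrow> poly G t \<ge> 0" unfolding G_def by (intro Gc_nn) auto
  have Gx: "poly G x \<ge> N^4" using Gc_at[of r a] ca by (simp add: G_def N_def)
  have lamG: "lam w n x * poly G x \<le> M * integral {-1..1} (poly G)"
    by (rule lam_bound_G[OF x AEM dG Gnn])
  have I: "integral {-1..1} (poly G) \<le> (2 * N^4 * sin a + 4 * N^3) * (24 * pi / N)"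
    unfolding G_def N_def by (rule G_integral[OF a])
  have Mpos: "M > 0" by (rule M_pos[OF AEM])
  have N0: "N > 0" unfolding N_def by (simp add: add_nonneg_pos)
  have nN: "real n \<le> 2 * N"
  proof -
    have "n \<le> 2 * (2 * r + 1)" unfolding r_def by presburger
    then have "real n \<le> real (2 * (2 * r + 1))" by (simp only: of_nat_le_iff)
    then have "real n \<le> 2 * (2 * real r + 1)" by simp
    then show ?thesis by (simp add: N_def)
  qed
  have s0: "sin a \<ge> 0" using a by (intro sin_ge_zero) auto
  have "lam w n x \<le> 1920 * M / real n * max (sin a) (1 / real n)"
    by (rule final_arith[OF Mpos N0 nN n1 s0 Gx lamG I])
  then show "lam w n x \<le> 1920 * M / real n * max (sqrt (1 - x^2)) (1 / real n)" by (simp add: sa)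
qed simp


end
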